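(* Let $f$ be a subluminal librational wave. Then there exists a real $\lambda_*>0$ with $\lambda_*\in\sigma(\mathrm{P})$, and one of the corresponding Floquet multipliers of (P) satisfies $\rho(\lambda_* )=1$.
   Context: A traveling wave of speed $c$ ($c^2\neq1$) of $u_{tt}-u_{xx}+\sin u=0$ is a real solution $f$ of $(c^2-1)f''+\sin f=0$, with energy $E$ given by $\tfrac12(c^2-1)(f')^2+1-\cos f=E$; it is subluminal librational if $c^2<1$ and $0<E<2$, and then periodic with fundamental period $T$ (smallest $T>0$ with $f(z+T)=f(z)\pmod{2\pi}$). Let $\gamma=1/(c^2-1)$. Equation (P): $p''-2c\gamma\lambda p'+\gamma(\lambda^2+\cos f(z))p=0$, written as a first-order system for $(p,p')$ with fundamental matrix $F(z;\lambda)$, $F(0;\lambda)=I$; its Floquet multipliers are the eigenvalues of $F(T;\lambda)$. $\sigma(\mathrm{P})$ is the set of $\lambda\in\mathbb{C}$ for which (P) has a nontrivial solution bounded on $\mathbb{R}$. *)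

theory Defs
  imports "HOL-Analysis.Analysis"
begin

definition traveling_wave :: "real \<Rightarrow> (real \<Rightarrow> real) \<Rightarrow> bool" where
  "traveling_wave c f \<longleftrightarrow>
     (\<forall>z. f differentiable at z \<and> deriv f differentiable at z \<and>
          (c^2 - 1) * deriv (deriv f) z + sin (f z) = 0)"

definition wave_energy :: "real \<Rightarrow> (real \<Rightarrow> real) \<Rightarrow> real \<Rightarrow> bool" where
  "wave_energy c f E \<longleftrightarrow>
     (\<forall>z. (1/2) * (c^2 - 1) * (deriv f z)^2 + 1 - cos (f z) = E)"

definition subluminal_librational :: "real \<Rightarrow> (real \<Rightarrow> real) \<Rightarrow> real \<Rightarrow> bool" where
  "subluminal_librational c f E \<longleftrightarrow>
     traveling_wave c f \<and> wave_energy c f E \<and> c^2 < 1 \<and> 0 < E \<and> E < 2"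

definition period_mod_2pi :: "(real \<Rightarrow> real) \<Rightarrow> real \<Rightarrow> bool" where
  "period_mod_2pi f T \<longleftrightarrow> (\<forall>z. \<exists>k::int. f (z + T) = f z + 2 * pi * of_int k)"

definition fundamental_period :: "(real \<Rightarrow> real) \<Rightarrow> real \<Rightarrow> bool" where
  "fundamental_period f T \<longleftrightarrow>
     0 < T \<and> period_mod_2pi f T \<and> (\<forall>S. 0 < S \<and> S < T \<longrightarrow> \<not> period_mod_2pi f S)"

definition gam :: "real \<Rightarrow> real" where
  "gam c = 1 / (c^2 - 1)"

definition solP :: "real \<Rightarrow> (real \<Rightarrow> real) \<Rightarrow> complex \<Rightarrow> (real \<Rightarrow> complex) \<Rightarrow> bool" where
  "solP c f lam p \<longleftrightarrow>
     (\<exists>q. \<forall>z. (p has_vector_derivative q z) (at z) \<and>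
              (q has_vector_derivative
                 (2 * of_real c * of_real (gam c) * lam * q z
                  - of_real (gam c) * (lam^2 + of_real (cos (f z))) * p z)) (at z))"

definition specP :: "real \<Rightarrow> (real \<Rightarrow> real) \<Rightarrow> complex set" where
  "specP c f = {lam. \<exists>p. solP c f lam p \<and> (\<exists>z. p z \<noteq> 0) \<and> bounded (range p)}"

definition coefP :: "real \<Rightarrow> (real \<Rightarrow> real) \<Rightarrow> complex \<Rightarrow> real \<Rightarrow> complex^2^2" where
  "coefP c f lam z = (\<chi> i j.
      if i = 1 then (if j = 1 then 0 else 1)
      else (if j = 1 then - of_real (gam c) * (lam^2 + of_real (cos (f z)))
            else 2 * of_real c * of_real (gam c) * lam))"

definition fund_matrix :: "real \<Rightarrow> (real \<Rightarrow> real) \<Rightarrow> complex \<Rightarrow> (real \<Rightarrow> complex^2^2) \<Rightarrow> bool" where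
  "fund_matrix c f lam F \<longleftrightarrow>
     F 0 = mat 1 \<and> (\<forall>z. (F has_vector_derivative (coefP c f lam z ** F z)) (at z))"

definition floquet_multiplier :: "real \<Rightarrow> (real \<Rightarrow> real) \<Rightarrow> real \<Rightarrow> complex \<Rightarrow> complex \<Rightarrow> bool" where
  "floquet_multiplier c f T lam \<rho> \<longleftrightarrow>
     (\<exists>F. fund_matrix c f lam F \<and> det (F T - mat \<rho>) = 0)"

end

theory Submission
  imports Defs
begin


definition hill :: "(real \<Rightarrow> real) \<Rightarrow> (real \<Rightarrow> real) \<Rightarrow> (real \<Rightarrow> real) \<Rightarrow> bool" where
  "hill Q x y \<longleftrightarrow> (\<forall>z. (x has_real_derivative y z) (at z) \<and> (y has_real_derivative Q z * x z) (at z))"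

lemma deriv_cont:
  fixes f :: "real \<Rightarrow> real"
  assumes "\<And>s. (f has_real_derivative f' s) (at s)"
  shows "continuous_on S f"
  using assms by (meson DERIV_continuous continuous_at_imp_continuous_on)

lemma gron_fwd:
  fixes e e' :: "real \<Rightarrow> real"
  assumes ab: "a \<le> b" and K: "K \<ge> 0" and be: "\<beta> \<ge> 0"
   and de: "\<And>s. (e has_real_derivative e' s) (at s)"
   and le: "\<And>s. a \<le> s \<Longrightarrow> s \<le> b \<Longrightarrow> e' s \<le> K * e s + \<beta>"
  shows "e b \<le> (e a + \<beta>*(b-a)) * exp (K*(b-a))"
proof -
  define \<psi> where "\<psi> s = e s * exp (-K*(s-a)) - \<beta>*(s-a)" for s
  have d\<psi>: "(\<psi> has_real_derivative (e' s * exp (-K*(s-a)) - K * e s * exp (-K*(s-a)) - \<beta>)) (at s)" for s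
    unfolding \<psi>_def by (rule derivative_eq_intros de refl | simp)+
  have "\<psi> b \<le> \<psi> a"
  proof (rule DERIV_nonpos_imp_decreasing_open[OF ab])
    fix x assume x: "a < x" "x < b"
    have ex: "exp (-K*(x-a)) \<le> 1" using K x by simp
    have "(e' x - K * e x) * exp (-K*(x-a)) \<le> \<beta> * exp (-K*(x-a))"
      using le[of x] x by (intro mult_right_mono) auto
    also have "\<dots> \<le> \<beta>" using ex be by (simp add: mult_left_le)
    finally have "e' x * exp (-K*(x-a)) - K * e x * exp (-K*(x-a)) - \<beta> \<le> 0"
      by (simp add: algebra_simps)
    then show "\<exists>y. (\<psi> has_real_derivative y) (at x) \<and> y \<le> 0" using d\<psi> by blast
  next
    show "continuous_on {a..b} \<psi>"
      using d\<psi> by (meson DERIV_continuous continuous_at_imp_continuous_on)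
  qed
  then have "e b * exp (-K*(b-a)) \<le> e a + \<beta>*(b-a)" unfolding \<psi>_def by simp
  then have "e b * exp (-K*(b-a)) * exp (K*(b-a)) \<le> (e a + \<beta>*(b-a)) * exp (K*(b-a))"
    by (intro mult_right_mono) auto
  moreover have "exp (-K*(b-a)) * exp (K*(b-a)) = 1" by (simp flip: exp_add)
  ultimately show ?thesis by (metis mult.assoc mult.right_neutral)
qed

lemma antideriv_exists:
  fixes g :: "real \<Rightarrow> real"
  assumes cg: "continuous_on UNIV g"
  shows "\<exists>G. G a = 0 \<and> (\<forall>z. (G has_real_derivative g z) (at z))"
proof -
  define G where "G z = integral {a..z} g - integral {z..a} g" for z
  have int: "g integrable_on {u..v}" for u v
    by (rule integrable_continuous_real) (use cg continuous_on_subset in blast)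
  have rep: "G y = integral {m..y} g - integral {m..a} g" if "m \<le> y" "m \<le> a" for m y
  proof (cases "a \<le> y")
    case True
    have "integral {y..a} g = 0"
      using True by (cases "y = a") auto
    moreover have "integral {m..a} g + integral {a..y} g = integral {m..y} g"
      using int True that by (intro Henstock_Kurzweil_Integration.integral_combine) auto
    ultimately show ?thesis unfolding G_def by simp
  next
    case False
    have "integral {a..y} g = 0" using False by simp
    moreover have "integral {m..y} g + integral {y..a} g = integral {m..a} g"
      using int False that by (intro Henstock_Kurzweil_Integration.integral_combine) auto
    ultimately show ?thesis unfolding G_def by simp
  qed
  have "(G has_real_derivative g x) (at x)" for x
  proof -
    define m where "m = min x a - 1"
    have "((\<lambda>y. integral {m..y} g) has_real_derivative g x) (at x within {m..x+1})"
      by (rule integral_has_real_derivative) (auto simp: m_def intro: continuous_on_subset[OF cg])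
    then have "((\<lambda>y. integral {m..y} g) has_real_derivative g x) (at x)"
      using at_within_Icc_at[of m x "x+1"] by (simp add: m_def)
    then have "((\<lambda>y. integral {m..y} g - integral {m..a} g) has_real_derivative g x) (at x)"
      by (rule derivative_eq_intros) auto
    then show ?thesis
      by (rule has_field_derivative_transform_within_open[where S="{m<..}"])
         (auto simp: m_def intro!: rep[symmetric])
  qed
  moreover have "G a = 0" unfolding G_def by simp
  ultimately show ?thesis by blast
qed

lemma poly_bound:
  fixes G g :: "real \<Rightarrow> real"
  assumes G0: "G a = 0" and dG: "\<And>s. (G has_real_derivative g s) (at s)"
    and bd: "\<And>s. \<bar>g s\<bar> \<le> C * \<bar>s - a\<bar>^n"
  shows "\<bar>G z\<bar> \<le> C * \<bar>z - a\<bar>^(Suc n) / (Suc n)"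
proof (cases "a \<le> z")
  case True
  define h where "h s = C * (s - a)^(Suc n) / (Suc n)" for s
  have dh: "(h has_real_derivative C * (s - a)^n) (at s)" for s
    unfolding h_def by (rule derivative_eq_intros refl | simp)+
  have c1: "continuous_on {a..z} (\<lambda>s. h s - G s)" "continuous_on {a..z} (\<lambda>s. h s + G s)"
    by (rule deriv_cont, rule DERIV_diff[OF dh dG]) (rule deriv_cont, rule DERIV_add[OF dh dG])
  have "h a - G a \<le> h z - G z"
  proof (rule DERIV_nonneg_imp_increasing_open[OF True _ c1(1)])
    fix x assume "a < x" "x < z"
    then have "g x \<le> C * (x-a)^n" using bd[of x] by simp
    then show "\<exists>y. ((\<lambda>s. h s - G s) has_real_derivative y) (at x) \<and> 0 \<le> y"
      using DERIV_diff[OF dh dG] by force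
  qed
  moreover have "h a + G a \<le> h z + G z"
  proof (rule DERIV_nonneg_imp_increasing_open[OF True _ c1(2)])
    fix x assume "a < x" "x < z"
    then have "- g x \<le> C * (x-a)^n" using bd[of x] by simp
    then show "\<exists>y. ((\<lambda>s. h s + G s) has_real_derivative y) (at x) \<and> 0 \<le> y"
      using DERIV_add[OF dh dG] by force
  qed
  moreover have "h a = 0" by (simp add: h_def)
  ultimately show ?thesis using True G0 by (simp add: h_def abs_le_iff)
next
  case False
  define h where "h s = C * (a - s)^(Suc n) / (Suc n)" for s
  have dh: "(h has_real_derivative - C * (a - s)^n) (at s)" for s
    unfolding h_def by (rule derivative_eq_intros refl | simp)+
  have c1: "continuous_on {z..a} (\<lambda>s. G s - h s)" "continuous_on {z..a} (\<lambda>s. - h s - G s)"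
    by (rule deriv_cont, rule DERIV_diff[OF dG dh]) (rule deriv_cont, rule DERIV_diff[OF DERIV_minus[OF dh] dG])
  have za: "z \<le> a" using False by simp
  have "G z - h z \<le> G a - h a"
  proof (rule DERIV_nonneg_imp_increasing_open[OF za _ c1(1)])
    fix x assume "z < x" "x < a"
    then have "- g x \<le> C * (a-x)^n" using bd[of x] by simp
    then show "\<exists>y. ((\<lambda>s. G s - h s) has_real_derivative y) (at x) \<and> 0 \<le> y"
      using DERIV_diff[OF dG dh] by force
  qed
  moreover have "- h z - G z \<le> - h a - G a"
  proof (rule DERIV_nonneg_imp_increasing_open[OF za _ c1(2)])
    fix x assume "z < x" "x < a"
    then have "g x \<le> C * (a-x)^n" using bd[of x] by simp
    then show "\<exists>y. ((\<lambda>s. - h s - G s) has_real_derivative y) (at x) \<and> 0 \<le> y"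
      using DERIV_diff[OF DERIV_minus[OF dh] dG] by force
  qed
  moreover have "h a = 0" by (simp add: h_def)
  ultimately show ?thesis using za G0 by (simp add: h_def abs_le_iff abs_minus_commute)
qed



lemma summable_expbound: "summable (\<lambda>n. M * (c::real)^n / fact n)"
proof -
  have "summable (\<lambda>n. M * (inverse (fact n) * c ^ n))"
    by (intro summable_mult summable_exp)
  then show ?thesis by (simp add: field_simps)
qed

lemma series_deriv:
  fixes F G :: "nat \<Rightarrow> real \<Rightarrow> real"
  assumes dF0: "\<And>z. (F 0 has_real_derivative 0) (at z)"
   and dF: "\<And>n z. (F (Suc n) has_real_derivative G n z) (at z)"
   and bF: "\<And>n z. \<bar>F n z\<bar> \<le> M * (K*\<bar>z-a\<bar>)^n / fact n"
   and bG: "\<And>n z. \<bar>G n z\<bar> \<le> M * (K*\<bar>z-a\<bar>)^n / fact n"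
   and K: "K \<ge> 0" and M: "M \<ge> 0"
  shows "((\<lambda>z. \<Sum>n. F n z) has_real_derivative (\<Sum>n. G n z)) (at z)"
proof -
  define F' where "F' n s = (case n of 0 \<Rightarrow> 0 | Suc m \<Rightarrow> G m s)" for n s
  define S where "S = {z-1..z+1}"
  define R where "R = \<bar>z - a\<bar> + 1"
  have sR: "\<bar>s - a\<bar> \<le> R" if "s \<in> S" for s using that by (auto simp: S_def R_def)
  have pw: "M * (K*\<bar>s-a\<bar>)^n / fact n \<le> M * (K*R)^n / fact n" if "s \<in> S" for s n
    using sR[OF that] K M by (intro divide_right_mono mult_left_mono power_mono mult_left_mono) auto
  have dF': "(F n has_real_derivative F' n s) (at s within S)" for n s
    by (cases n) (auto simp: F'_def intro: has_field_derivative_at_within dF0 dF)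
  define Mb where "Mb n = (case n of 0 \<Rightarrow> 0 | Suc m \<Rightarrow> M * (K*R)^m / fact m)" for n
  have sMb: "summable Mb"
  proof -
    have "summable (\<lambda>n. Mb (Suc n))" by (simp add: Mb_def summable_expbound)
    then show ?thesis by (simp add: summable_Suc_iff)
  qed
  have uc: "uniformly_convergent_on S (\<lambda>n x. \<Sum>i<n. F' i x)"
  proof (rule Weierstrass_m_test'[OF _ sMb])
    fix n x assume "x \<in> S"
    then show "norm (F' n x) \<le> Mb n"
      by (cases n) (auto simp: F'_def Mb_def intro: order.trans[OF bG pw])
  qed
  have sumF: "summable (\<lambda>n. F n z)"
    by (rule summable_comparison_test[OF _ summable_expbound[of M "K*\<bar>z-a\<bar>"]]) (use bF in auto)
  have zS: "z \<in> interior S" "z \<in> S" by (auto simp: S_def interior_atLeastAtMost_real)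
  have "((\<lambda>x. \<Sum>n. F n x) has_real_derivative (\<Sum>n. F' n z)) (at z)"
    by (rule has_field_derivative_series'(2)[OF _ dF' uc zS(2) sumF zS(1)]) (simp add: S_def)
  moreover have "(\<Sum>n. F' n z) = (\<Sum>n. G n z)"
  proof -
    have sG: "summable (\<lambda>n. G n z)"
      by (rule summable_comparison_test[OF _ summable_expbound[of M "K*\<bar>z-a\<bar>"]]) (use bG in auto)
    then have "(\<lambda>n. F' (Suc n) z) sums (\<Sum>n. G n z)" by (simp add: F'_def summable_sums)
    then have "(\<lambda>n. F' n z) sums ((\<Sum>n. G n z) + F' 0 z)" by (subst sums_Suc_iff[symmetric]) simp
    then have "(\<lambda>n. F' n z) sums (\<Sum>n. G n z)" by (simp add: F'_def)
    then show ?thesis by (simp add: sums_iff)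
  qed
  ultimately show ?thesis by simp
qed

definition antid :: "real \<Rightarrow> (real \<Rightarrow> real) \<Rightarrow> real \<Rightarrow> real" where
  "antid a g = (SOME G. G a = 0 \<and> (\<forall>z. (G has_real_derivative g z) (at z)))"

lemma antid:
  assumes "continuous_on UNIV g"
  shows "antid a g a = 0" "(antid a g has_real_derivative g z) (at z)"
  using someI_ex[OF antideriv_exists[OF assms, of a]] unfolding antid_def by blast+

fun pic :: "(real \<Rightarrow> real) \<Rightarrow> real \<Rightarrow> real \<Rightarrow> real \<Rightarrow> nat \<Rightarrow> (real \<Rightarrow> real) \<times> (real \<Rightarrow> real)" where
  "pic Q a x0 y0 0 = ((\<lambda>z. x0), (\<lambda>z. y0))"
| "pic Q a x0 y0 (Suc n) = (antid a (snd (pic Q a x0 y0 n)), antid a (\<lambda>s. Q s * fst (pic Q a x0 y0 n) s))"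

lemma pic_props:
  assumes cQ: "continuous_on UNIV Q" and K: "K \<ge> 1" and bQ: "\<And>z. \<bar>Q z\<bar> \<le> K"
  shows "continuous_on UNIV (fst (pic Q a x0 y0 n)) \<and> continuous_on UNIV (snd (pic Q a x0 y0 n))
     \<and> (\<forall>z. \<bar>fst (pic Q a x0 y0 n) z\<bar> \<le> (\<bar>x0\<bar>+\<bar>y0\<bar>) * (K*\<bar>z-a\<bar>)^n / fact n)
     \<and> (\<forall>z. \<bar>snd (pic Q a x0 y0 n) z\<bar> \<le> (\<bar>x0\<bar>+\<bar>y0\<bar>) * (K*\<bar>z-a\<bar>)^n / fact n)"
proof (induction n)
  case 0 then show ?case by auto
next
  case (Suc n)
  define M where "M = \<bar>x0\<bar>+\<bar>y0\<bar>"
  define X where "X = fst (pic Q a x0 y0 n)"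
  define Y where "Y = snd (pic Q a x0 y0 n)"
  have cY: "continuous_on UNIV Y" and cX: "continuous_on UNIV X" using Suc by (auto simp: X_def Y_def)
  have bX: "\<bar>X s\<bar> \<le> M * (K*\<bar>s-a\<bar>)^n / fact n" and bY: "\<bar>Y s\<bar> \<le> M * (K*\<bar>s-a\<bar>)^n / fact n" for s
    using Suc by (auto simp: X_def Y_def M_def)
  have cQX: "continuous_on UNIV (\<lambda>s. Q s * X s)" using cX cQ by (intro continuous_intros) auto
  have d1: "(antid a Y has_real_derivative Y z) (at z)" for z using antid[OF cY] by blast
  have d2: "(antid a (\<lambda>s. Q s * X s) has_real_derivative Q z * X z) (at z)" for z using antid[OF cQX] by blast
  have M0: "M \<ge> 0" by (simp add: M_def)
  have eq: "M * (K*\<bar>s-a\<bar>)^n / fact n * K = (M * K^n / fact n * K) * \<bar>s-a\<bar>^n" for s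
    by (simp add: power_mult_distrib)
  have b1: "\<bar>Y s\<bar> \<le> (M * K^n / fact n * K) * \<bar>s-a\<bar>^n" for s
  proof -
    have "\<bar>Y s\<bar> \<le> M * (K*\<bar>s-a\<bar>)^n / fact n" by (rule bY)
    also have "\<dots> \<le> M * (K*\<bar>s-a\<bar>)^n / fact n * K"
    proof -
      have A0: "0 \<le> M * (K*\<bar>s-a\<bar>)^n / fact n" using M0 K by simp
      show ?thesis using mult_left_mono[OF K A0] by simp
    qed
    finally show ?thesis by (simp only: eq)
  qed
  have b2: "\<bar>Q s * X s\<bar> \<le> (M * K^n / fact n * K) * \<bar>s-a\<bar>^n" for s
  proof -
    have "\<bar>Q s * X s\<bar> \<le> K * (M * (K*\<bar>s-a\<bar>)^n / fact n)"
      unfolding abs_mult using bQ[of s] bX[of s] K by (intro mult_mono) auto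
    moreover have "K * (M * (K*\<bar>s-a\<bar>)^n / fact n) = (M * K^n / fact n * K) * \<bar>s-a\<bar>^n"
      by (simp add: power_mult_distrib)
    ultimately show ?thesis by (rule ord_le_eq_trans)
  qed
  have fin: "(M * K^n / fact n * K) * \<bar>z - a\<bar>^(Suc n) / (Suc n) = M * (K*\<bar>z-a\<bar>)^(Suc n) / fact (Suc n)" for z
    by (simp add: power_mult_distrib field_simps)
  have "\<bar>antid a Y z\<bar> \<le> M * (K*\<bar>z-a\<bar>)^(Suc n) / fact (Suc n)" for z
    using poly_bound[OF antid(1)[OF cY] d1 b1, of z] fin[of z] by simp
  moreover have "\<bar>antid a (\<lambda>s. Q s * X s) z\<bar> \<le> M * (K*\<bar>z-a\<bar>)^(Suc n) / fact (Suc n)" for z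
    using poly_bound[OF antid(1)[OF cQX] d2 b2, of z] fin[of z] by simp
  moreover have "continuous_on UNIV (antid a Y)" "continuous_on UNIV (antid a (\<lambda>s. Q s * X s))"
    by (rule deriv_cont, rule d1) (rule deriv_cont, rule d2)
  ultimately show ?case by (simp add: X_def Y_def M_def)
qed

lemma hill_exists:
  assumes cQ: "continuous_on UNIV Q" and bQ: "\<And>z. \<bar>Q z\<bar> \<le> K"
  shows "\<exists>x y. hill Q x y \<and> x a = x0 \<and> y a = y0"
proof -
  define K' where "K' = max 1 K"
  have K': "K' \<ge> 1" "\<And>z. \<bar>Q z\<bar> \<le> K'" using bQ by (auto simp: K'_def le_max_iff_disj)
  define M where "M = \<bar>x0\<bar>+\<bar>y0\<bar>"
  define X where "X n = fst (pic Q a x0 y0 n)" for n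
  define Y where "Y n = snd (pic Q a x0 y0 n)" for n
  note pp = pic_props[OF cQ K'(1) K'(2), of a x0 y0]
  have cX: "continuous_on UNIV (X n)" and cY: "continuous_on UNIV (Y n)" for n
    using pp by (auto simp: X_def Y_def)
  have bX: "\<bar>X n s\<bar> \<le> M * (K'*\<bar>s-a\<bar>)^n / fact n" and bY: "\<bar>Y n s\<bar> \<le> M * (K'*\<bar>s-a\<bar>)^n / fact n" for n s
    using pp by (auto simp: X_def Y_def M_def)
  have cQX: "continuous_on UNIV (\<lambda>s. Q s * X n s)" for n using cX cQ by (intro continuous_intros) auto
  have dX: "(X (Suc n) has_real_derivative Y n z) (at z)" for n z
    using antid(2)[OF cY[of n]] by (simp add: X_def Y_def)
  have dY: "(Y (Suc n) has_real_derivative Q z * X n z) (at z)" for n z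
    using antid(2)[OF cQX[of n]] by (simp add: X_def Y_def)
  have bQX: "\<bar>Q s * X n s\<bar> \<le> (K' * M) * (K'*\<bar>s-a\<bar>)^n / fact n" for n s
  proof -
    have "\<bar>Q s * X n s\<bar> \<le> K' * (M * (K'*\<bar>s-a\<bar>)^n / fact n)"
      unfolding abs_mult using K'(2)[of s] bX[of n s] K' by (intro mult_mono) auto
    then show ?thesis by simp
  qed
  have bX': "\<bar>X n s\<bar> \<le> (K' * M) * (K'*\<bar>s-a\<bar>)^n / fact n" and bY': "\<bar>Y n s\<bar> \<le> (K' * M) * (K'*\<bar>s-a\<bar>)^n / fact n" for n s
  proof -
    have A0: "0 \<le> M * (K'*\<bar>s-a\<bar>)^n / fact n" using K' by (simp add: M_def)
    have "M * (K'*\<bar>s-a\<bar>)^n / fact n \<le> K' * (M * (K'*\<bar>s-a\<bar>)^n / fact n)"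
      using mult_right_mono[OF K'(1) A0] by simp
    then show "\<bar>X n s\<bar> \<le> (K' * M) * (K'*\<bar>s-a\<bar>)^n / fact n" "\<bar>Y n s\<bar> \<le> (K' * M) * (K'*\<bar>s-a\<bar>)^n / fact n"
      using bX[of n s] bY[of n s] by auto
  qed
  have KM: "K' * M \<ge> 0" "K' \<ge> 0" using K' by (auto simp: M_def)
  define x where "x z = (\<Sum>n. X n z)" for z
  define y where "y z = (\<Sum>n. Y n z)" for z
  have dx: "(x has_real_derivative y z) (at z)" for z
    unfolding x_def y_def
    by (rule series_deriv[OF _ dX bX' bY' KM(2,1)]) (simp add: X_def)
  have dy: "(y has_real_derivative Q z * x z) (at z)" for z
  proof -
    have "(y has_real_derivative (\<Sum>n. Q z * X n z)) (at z)"
      unfolding y_def by (rule series_deriv[OF _ dY bY' bQX KM(2,1)]) (simp add: Y_def)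
    moreover have "(\<Sum>n. Q z * X n z) = Q z * x z"
    proof -
      have "summable (\<lambda>n. X n z)"
        by (rule summable_comparison_test[OF _ summable_expbound[of M "K'*\<bar>z-a\<bar>"]]) (use bX in auto)
      then show ?thesis unfolding x_def by (rule suminf_mult)
    qed
    ultimately show ?thesis by simp
  qed
  have X0: "X n a = (if n = 0 then x0 else 0)" and Y0: "Y n a = (if n = 0 then y0 else 0)" for n
    using bX[of n a] bY[of n a] by (cases n, auto simp: X_def Y_def)+
  have si: "(\<Sum>n. if n = (0::nat) then c else 0) = (c::real)" for c
    using sums_single[of 0 "\<lambda>_. c"] by (simp add: sums_iff)
  have "x a = x0" "y a = y0" unfolding x_def y_def X0 Y0 si by simp_all
  moreover have "hill Q x y" unfolding hill_def using dx dy by blast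
  ultimately show ?thesis by blast
qed



lemma hill_diff_fwd:
  assumes h1: "hill Q1 x1 y1" and h2: "hill Q2 x2 y2"
    and K: "K \<ge> 0" and bQ: "\<And>s. \<bar>Q1 s\<bar> \<le> K" and ab: "a \<le> b" and be: "\<beta> \<ge> 0"
    and bd: "\<And>s. a \<le> s \<Longrightarrow> s \<le> b \<Longrightarrow> \<bar>(Q1 s - Q2 s) * x2 s\<bar> \<le> \<beta>"
  shows "(x1 b - x2 b)^2 + (y1 b - y2 b)^2 \<le> ((x1 a - x2 a)^2 + (y1 a - y2 a)^2 + \<beta>^2*(b-a)) * exp ((2+K)*(b-a))"
proof -
  define e where "e s = (x1 s - x2 s)^2 + (y1 s - y2 s)^2" for s
  define e' where "e' s = 2*(x1 s - x2 s)*(y1 s - y2 s) + 2*(y1 s - y2 s)*(Q1 s * x1 s - Q2 s * x2 s)" for s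
  have de: "(e has_real_derivative e' s) (at s)" for s
  proof -
    have "(x1 has_real_derivative y1 s) (at s)" "(y1 has_real_derivative Q1 s * x1 s) (at s)"
         "(x2 has_real_derivative y2 s) (at s)" "(y2 has_real_derivative Q2 s * x2 s) (at s)"
      using h1 h2 unfolding hill_def by auto
    then show ?thesis unfolding e_def e'_def
      by (auto intro!: derivative_eq_intros simp: algebra_simps)
  qed
  have le: "e' s \<le> (2+K) * e s + \<beta>^2" if "a \<le> s" "s \<le> b" for s
  proof -
    define d where "d = x1 s - x2 s"
    define f where "f = y1 s - y2 s"
    define q where "q = Q1 s"
    define r where "r = (Q1 s - Q2 s) * x2 s"
    have eq: "e' s = 2*d*f + 2*f*(q*d) + 2*f*r" unfolding e'_def d_def f_def q_def r_def by (simp add: algebra_simps)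
    have A: "2*d*f \<le> d^2+f^2" using zero_le_power2[of "d-f"] by (simp add: power2_eq_square algebra_simps)
    have A': "\<bar>2*f*d\<bar> \<le> d^2+f^2" using zero_le_power2[of "\<bar>d\<bar> - \<bar>f\<bar>"]
      by (simp add: power2_eq_square algebra_simps abs_mult)
    have "2*f*(q*d) \<le> \<bar>q\<bar> * \<bar>2*f*d\<bar>" by (simp add: abs_mult[symmetric] abs_le_iff algebra_simps)
    also have "\<dots> \<le> K * (d^2+f^2)" using bQ[of s] A' by (intro mult_mono) (auto simp: q_def)
    finally have B: "2*f*(q*d) \<le> K * (d^2+f^2)" .
    have "\<bar>r\<bar> \<le> \<beta>" using bd that by (simp add: r_def)
    then have "r^2 \<le> \<beta>^2" using power_mono[of "\<bar>r\<bar>" \<beta> 2] by simp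
    moreover have "2*f*r \<le> f^2 + r^2" using zero_le_power2[of "f-r"] unfolding power2_diff by linarith
    ultimately have C: "2*f*r \<le> f^2 + \<beta>^2" by simp
    have es: "e s = d^2 + f^2" by (simp add: e_def d_def f_def)
    have d2: "0 \<le> d^2" "0 \<le> f^2" by simp_all
    show ?thesis unfolding es eq using A B C d2 unfolding distrib_right distrib_left by linarith
  qed
  have K2: "2 + K \<ge> 0" using K by simp
  have "e b \<le> (e a + \<beta>^2*(b-a)) * exp ((2+K)*(b-a))"
    by (rule gron_fwd[OF ab K2 _ de le]) auto
  then show ?thesis by (simp add: e_def)
qed

lemma hill_reflect:
  assumes "hill Q x y"
  shows "hill (\<lambda>z. Q (2*a - z)) (\<lambda>z. x (2*a - z)) (\<lambda>z. - y (2*a - z))"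
  unfolding hill_def
proof
  fix z
  have d1: "(x has_real_derivative y (2*a - z)) (at (2*a - z))"
    and d2: "(y has_real_derivative Q (2*a-z) * x (2*a - z)) (at (2*a - z))"
    using assms unfolding hill_def by auto
  have dl: "((\<lambda>z. 2*a - z) has_real_derivative -1) (at z)" by (auto intro!: derivative_eq_intros)
  show "((\<lambda>z. x (2 * a - z)) has_real_derivative - y (2 * a - z)) (at z) \<and>
         ((\<lambda>z. - y (2 * a - z)) has_real_derivative Q (2 * a - z) * x (2 * a - z)) (at z)"
    using DERIV_chain2[OF d1 dl] DERIV_minus[OF DERIV_chain2[OF d2 dl]] by simp
qed

lemma hill_diff:
  assumes h1: "hill Q1 x1 y1" and h2: "hill Q2 x2 y2"
    and K: "K \<ge> 0" and bQ: "\<And>s. \<bar>Q1 s\<bar> \<le> K" and be: "\<beta> \<ge> 0"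
    and bd: "\<And>s. \<bar>s - a\<bar> \<le> \<bar>b - a\<bar> \<Longrightarrow> \<bar>(Q1 s - Q2 s) * x2 s\<bar> \<le> \<beta>"
  shows "(x1 b - x2 b)^2 + (y1 b - y2 b)^2 \<le> ((x1 a - x2 a)^2 + (y1 a - y2 a)^2 + \<beta>^2*\<bar>b-a\<bar>) * exp ((2+K)*\<bar>b-a\<bar>)"
proof (cases "a \<le> b")
  case True
  show ?thesis using hill_diff_fwd[OF h1 h2 K bQ True be] bd True by simp
next
  case False
  note r1 = hill_reflect[OF h1, of a] and r2 = hill_reflect[OF h2, of a]
  have "(x1 (2*a - (2*a-b)) - x2 (2*a - (2*a-b)))^2 + (- y1 (2*a - (2*a-b)) - - y2 (2*a - (2*a-b)))^2
     \<le> ((x1 (2*a-a) - x2 (2*a-a))^2 + (- y1 (2*a-a) - - y2 (2*a-a))^2 + \<beta>^2*((2*a-b)-a)) * exp ((2+K)*((2*a-b)-a))"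
    by (rule hill_diff_fwd[OF r1 r2 K _ _ be, of a "2*a-b"]) (use bQ False bd in auto)
  then show ?thesis using False by (simp add: power2_commute algebra_simps)
qed

lemma hill_zero: "hill Q (\<lambda>_. 0) (\<lambda>_. 0)"
  unfolding hill_def by auto

lemma hill_unique:
  assumes h1: "hill Q x1 y1" and h2: "hill Q x2 y2" and bQ: "\<And>s. \<bar>Q s\<bar> \<le> K"
    and "x1 a = x2 a" "y1 a = y2 a"
  shows "x1 z = x2 z \<and> y1 z = y2 z"
proof -
  have K: "K \<ge> 0" using bQ[of 0] by simp
  have "(x1 z - x2 z)^2 + (y1 z - y2 z)^2 \<le> 0"
    using hill_diff[OF h1 h2 K bQ order.refl, of a z] assms by simp
  then show ?thesis by (smt (verit) sum_power2_ge_zero sum_power2_eq_zero_iff)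
qed

lemma hill_energy:
  assumes h1: "hill Q x y" and bQ: "\<And>s. \<bar>Q s\<bar> \<le> K"
  shows "(x z)^2 + (y z)^2 \<le> ((x a)^2 + (y a)^2) * exp ((2+K)*\<bar>z-a\<bar>)"
proof -
  have K: "K \<ge> 0" using bQ[of 0] by simp
  show ?thesis using hill_diff[OF h1 hill_zero K bQ order.refl, of a z] by simp
qed



lemma periodic_int:
  fixes g :: "real \<Rightarrow> 'a"
  assumes "\<And>z. g (z + T) = g z"
  shows "g (z + of_int n * T) = g z"
proof (induction n arbitrary: z rule: int_induct[where k=0])
  case base then show ?case by simp
next
  case (step1 i) then show ?case using assms[of "z + of_int i * T"] by (simp add: algebra_simps)
next
  case (step2 i)
  have "g (z + of_int (i - 1) * T) = g (z + of_int (i-1) * T + T)" using assms by simp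
  also have "\<dots> = g (z + of_int i * T)" by (simp add: algebra_simps)
  finally show ?case using step2 by simp
qed

lemma periodic_reduce:
  fixes g :: "real \<Rightarrow> 'a"
  assumes "\<And>z. g (z + T) = g z" and T: "T > 0"
  shows "\<exists>r. 0 \<le> r \<and> r \<le> T \<and> g z = g r"
proof -
  define n where "n = \<lfloor>z / T\<rfloor>"
  define r where "r = z - of_int n * T"
  have "of_int n \<le> z / T" "z / T < of_int n + 1" unfolding n_def by linarith+
  then have "of_int n * T \<le> z" "z < (of_int n + 1) * T" using T by (auto simp: field_simps)
  then have "0 \<le> r" "r \<le> T" by (auto simp: r_def algebra_simps)
  moreover have "g z = g (r + of_int n * T)" by (simp add: r_def)
  then have "g z = g r" using periodic_int[of g T, OF assms(1)] by simp
  ultimately show ?thesis by blast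
qed

lemma first_fail:
  fixes w :: "real \<Rightarrow> real"
  assumes ab: "a \<le> b" and cw: "continuous_on {a..b} w" and wa: "w a > 0"
    and step: "\<And>t. a \<le> t \<Longrightarrow> t \<le> b \<Longrightarrow> (\<And>r. a \<le> r \<Longrightarrow> r < t \<Longrightarrow> w r > 0) \<Longrightarrow> w t > 0"
  shows "\<forall>t\<in>{a..b}. w t > 0"
proof (rule ccontr)
  assume nt: "\<not> (\<forall>t\<in>{a..b}. w t > 0)"
  define S where "S = {t\<in>{a..b}. w t \<le> 0}"
  have ne: "S \<noteq> {}" using nt by (auto simp: S_def)
  have cl: "closed S" unfolding S_def
    using continuous_closed_preimage[OF cw closed_atLeastAtMost[of a b], of "{..0}"]
    by (simp add: vimage_def Int_def conj_commute)
  have bb: "bdd_below S" by (auto simp: S_def bdd_below_def)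
  define s where "s = Inf S"
  have sS: "s \<in> S" unfolding s_def by (rule closed_contains_Inf[OF ne bb cl])
  have "w r > 0" if "a \<le> r" "r < s" for r
  proof (rule ccontr)
    assume "\<not> w r > 0"
    then have "r \<in> S" using that sS by (auto simp: S_def)
    then have "s \<le> r" unfolding s_def by (rule cInf_lower[OF _ bb])
    then show False using that by simp
  qed
  then have "w s > 0" using step sS by (auto simp: S_def)
  then show False using sS by (auto simp: S_def)
qed

locale wave =
  fixes c E T :: real and f :: "real \<Rightarrow> real"
  assumes sl: "subluminal_librational c f E"
    and fp: "fundamental_period f T"
begin

definition "\<gamma> = gam c"
definition "f1 = deriv f"
definition "f2 = deriv f1"
definition "Q lam z = \<gamma>^2 * lam^2 - \<gamma> * cos (f z)"

lemma c1: "c^2 < 1" and E: "0 < E" "E < 2" and T: "T > 0"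
  using sl fp by (auto simp: subluminal_librational_def fundamental_period_def)

lemma gam_neg: "\<gamma> < 0" using c1 by (simp add: \<gamma>_def gam_def)
lemma gam_mul: "\<gamma> * (c^2 - 1) = 1" using c1 by (simp add: \<gamma>_def gam_def)
lemma gam_ge1: "- \<gamma> \<ge> 1"
proof -
  have "0 < 1 - c^2" "1 - c^2 \<le> 1" using c1 by auto
  then have "1 \<le> 1 / (1 - c^2)" by (simp add: field_simps)
  moreover have "- \<gamma> = 1 / (1 - c^2)" by (simp add: \<gamma>_def gam_def divide_simps)
  ultimately show ?thesis by simp
qed

lemma df: "(f has_real_derivative f1 z) (at z)"
  and df1: "(f1 has_real_derivative f2 z) (at z)"
  and ode: "(c^2 - 1) * f2 z + sin (f z) = 0"
  using sl unfolding subluminal_librational_def traveling_wave_def f1_def f2_def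
  by (auto simp: DERIV_deriv_iff_real_differentiable)

lemma f2_eq: "f2 z = - \<gamma> * sin (f z)"
proof -
  have a: "f2 z = \<gamma> * ((c^2 - 1) * f2 z)" using gam_mul by (simp add: mult.assoc[symmetric])
  have "(c^2 - 1) * f2 z = - sin (f z)" using ode[of z] by linarith
  then show ?thesis using a by simp
qed

lemma df2: "(f2 has_real_derivative (- \<gamma> * cos (f z) * f1 z)) (at z)"
proof -
  have "((\<lambda>z. - \<gamma> * sin (f z)) has_real_derivative (- \<gamma> * (cos (f z) * f1 z))) (at z)"
    by (auto intro!: derivative_eq_intros df)
  moreover have fe: "f2 = (\<lambda>z. - \<gamma> * sin (f z))" by (rule ext, rule f2_eq)
  ultimately show ?thesis by (simp add: fe mult.assoc)
qed

lemma cont_f: "continuous_on S f" by (rule deriv_cont[OF df])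

lemma energy: "(1/2) * (c^2 - 1) * (f1 z)^2 + 1 - cos (f z) = E"
  using sl unfolding subluminal_librational_def wave_energy_def f1_def by auto

lemma cos_le: "cos (f z) \<le> 1 - E"
proof -
  have "(1/2) * (c^2 - 1) * (f1 z)^2 \<le> 0" using c1 by (simp add: mult_nonpos_nonneg)
  then show ?thesis using energy[of z] by linarith
qed

lemma f1_zero_iff: "f1 z = 0 \<longleftrightarrow> cos (f z) = 1 - E"
  using energy[of z] c1 by auto

lemma f_periodic: "f (z + T) = f z"
proof -
  obtain k :: int where k: "f (z + T) = f z + 2 * pi * k"
    using fp unfolding fundamental_period_def period_mod_2pi_def by blast
  have no2pi: "f t \<noteq> 2 * pi * m" for t and m :: int
  proof
    assume "f t = 2 * pi * m"
    then have "cos (f t) = 1" by (simp add: cos_one_2pi_int mult.commute)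
    then show False using cos_le[of t] E by simp
  qed
  have "k = 0"
  proof (rule ccontr)
    assume k0: "k \<noteq> 0"
    define m where "m = (if k > 0 then \<lceil>f z / (2*pi)\<rceil> else \<lfloor>f z / (2*pi)\<rfloor>)"
    have pi2: "2 * pi > 0" by simp
    have "\<exists>t. z \<le> t \<and> t \<le> z + T \<and> f t = 2 * pi * m"
    proof (cases "k > 0")
      case True
      then have "f z / (2*pi) \<le> m" "m < f z / (2*pi) + 1" by (auto simp: m_def) linarith
      then have "f z \<le> 2*pi*m" "2*pi*m \<le> f z + 2*pi" using pi2 by (auto simp: field_simps)
      moreover have "f z + 2*pi \<le> f (z + T)"
      proof -
        have "1 \<le> real_of_int k" using True by simp
        then have "2*pi*1 \<le> 2*pi*k" using pi2 by (intro mult_left_mono) auto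
        then show ?thesis using k by simp
      qed
      ultimately show ?thesis using IVT'[of f z "2*pi*m" "z+T"] T cont_f by auto
    next
      case False
      then have kn: "k \<le> -1" using k0 by simp
      have "f z / (2*pi) - 1 < m" "m \<le> f z / (2*pi)" using False by (auto simp: m_def)
      then have "2*pi*m \<le> f z" "f z - 2*pi \<le> 2*pi*m" using pi2 by (auto simp: field_simps)
      moreover have "f (z + T) \<le> f z - 2*pi"
      proof -
        have "2 * pi * k \<le> 2 * pi * (-1)" using kn pi2 by (intro mult_left_mono) auto
        then show ?thesis using k by simp
      qed
      ultimately show ?thesis using IVT2'[of f "z+T" "2*pi*m" z] T cont_f by auto
    qed
    then show False using no2pi by blast
  qed
  then show ?thesis using k by simp
qed

lemma f1_periodic: "f1 (z + T) = f1 z"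
proof -
  have "((\<lambda>s. f (s + T)) has_real_derivative f1 (z + T)) (at z)"
    using df[of "z+T"] by (simp add: DERIV_shift)
  moreover have "(\<lambda>s. f (s + T)) = f" using f_periodic by auto
  ultimately show ?thesis using df[of z] DERIV_unique by metis
qed

lemma Q_periodic: "Q lam (z + T) = Q lam z"
  by (simp add: Q_def f_periodic)

lemma Q_cont: "continuous_on S (Q lam)"
  unfolding Q_def by (intro continuous_intros cont_f)

lemma Q_bound: "\<bar>Q lam z\<bar> \<le> \<gamma>^2 * lam^2 - \<gamma>"
proof -
  have "\<bar>\<gamma> * cos (f z)\<bar> \<le> - \<gamma>" using gam_neg by (simp add: abs_mult)
  then show ?thesis unfolding Q_def by (simp add: abs_le_iff) (smt (verit) zero_le_power2 mult_nonneg_nonneg)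
qed

end


lemma hill_scale:
  assumes "hill Q x y" shows "hill Q (\<lambda>z. k * x z) (\<lambda>z. k * y z)"
  using assms unfolding hill_def by (auto intro!: derivative_eq_intros simp: algebra_simps)

lemma lip_deriv:
  fixes g g' :: "real \<Rightarrow> real"
  assumes dg: "\<And>s. (g has_real_derivative g' s) (at s)"
    and bd: "\<And>s. min z z' \<le> s \<Longrightarrow> s \<le> max z z' \<Longrightarrow> \<bar>g' s\<bar> \<le> L"
  shows "\<bar>g z - g z'\<bar> \<le> L * \<bar>z - z'\<bar>"
proof -
  define lo where "lo = min z z'"
  define hi where "hi = max z z'"
  have lh: "lo \<le> hi" by (simp add: lo_def hi_def)
  have cg: "continuous_on {lo..hi} g" by (rule deriv_cont[OF dg])
  have c1: "continuous_on {lo..hi} (\<lambda>s. L * s - g s)" "continuous_on {lo..hi} (\<lambda>s. L * s + g s)"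
    using cg by (auto intro!: continuous_intros)
  have "L * lo - g lo \<le> L * hi - g hi"
  proof (rule DERIV_nonneg_imp_increasing_open[OF lh _ c1(1)])
    fix x assume "lo < x" "x < hi"
    then have "g' x \<le> L" using bd[of x] by (auto simp: lo_def hi_def)
    then show "\<exists>y. ((\<lambda>s. L * s - g s) has_real_derivative y) (at x) \<and> 0 \<le> y"
      by (intro exI[of _ "L - g' x"]) (auto intro!: derivative_eq_intros dg)
  qed
  moreover have "L * lo + g lo \<le> L * hi + g hi"
  proof (rule DERIV_nonneg_imp_increasing_open[OF lh _ c1(2)])
    fix x assume "lo < x" "x < hi"
    then have "- g' x \<le> L" using bd[of x] by (auto simp: lo_def hi_def)
    then show "\<exists>y. ((\<lambda>s. L * s + g s) has_real_derivative y) (at x) \<and> 0 \<le> y"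
      by (intro exI[of _ "L + g' x"]) (auto intro!: derivative_eq_intros dg)
  qed
  ultimately show ?thesis unfolding lo_def hi_def
    by (cases "z \<le> z'") (auto simp: abs_le_iff algebra_simps)
qed

lemma abs_le_sq: "\<bar>x::real\<bar> \<le> 1 + x^2"
  using zero_le_power2[of "\<bar>x\<bar> - 1/2"] by (simp add: power2_eq_square algebra_simps)

context wave begin

lemma sin_ne: "cos x = 1 - E \<Longrightarrow> sin x \<noteq> 0"
proof
  assume "cos x = 1 - E" "sin x = 0"
  then have "(1 - E)^2 = 1" using sin_cos_squared_add[of x] by simp
  then have "E * (E - 2) = 0" by (simp add: power2_eq_square algebra_simps)
  then show False using E by simp
qed

lemma zeros: "\<exists>z0 z1. f1 z0 = 0 \<and> z0 < z1 \<and> z1 < z0 + T \<and> f1 z1 = 0 \<and> f1 (z0 + T) = 0 \<and> f2 z0 \<noteq> 0"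
proof -
  have ne: "{0..T} \<noteq> {}" "{z0..z0+T} \<noteq> {}" for z0 using T by auto
  obtain z0 where z0: "z0 \<in> {0..T}" "\<forall>y\<in>{0..T}. f y \<le> f z0"
    using continuous_attains_sup[OF compact_Icc ne(1) cont_f] by blast
  have gmax: "f y \<le> f z0" for y
  proof -
    obtain r where "0 \<le> r" "r \<le> T" "f y = f r" using periodic_reduce[of f T y, OF f_periodic T] by blast
    then show ?thesis using z0 by auto
  qed
  have f1z0: "f1 z0 = 0" by (rule DERIV_local_max[OF df, of 1]) (use gmax in auto)
  have sz0: "sin (f z0) \<noteq> 0" using sin_ne f1_zero_iff f1z0 by blast
  have nc: "\<exists>y. f y < f z0"
  proof (rule ccontr)
    assume "\<not> ?thesis"
    then have fc: "f y = f z0" for y using gmax[of y] by (metis linorder_not_less order_antisym)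
    then have fe: "f = (\<lambda>_. f z0)" by auto
    have "f1 y = 0" for y
    proof -
      have "((\<lambda>_. f z0) has_real_derivative 0) (at y)" by simp
      then have "(f has_real_derivative 0) (at y)" using fe by simp
      then show ?thesis using DERIV_unique[OF df[of y]] by blast
    qed
    then have fe1: "f1 = (\<lambda>_. 0)" by auto
    have "f2 z0 = 0"
    proof -
      have "((\<lambda>_. 0) has_real_derivative 0) (at z0)" by simp
      then have "(f1 has_real_derivative 0) (at z0)" using fe1 by simp
      then show ?thesis using DERIV_unique[OF df1[of z0]] by blast
    qed
    then have "sin (f z0) = 0" using f2_eq[of z0] gam_neg by simp
    then show False using sz0 by simp
  qed
  obtain z1 where z1: "z1 \<in> {z0..z0+T}" "\<forall>y\<in>{z0..z0+T}. f z1 \<le> f y"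
    using continuous_attains_inf[OF compact_Icc ne(2) cont_f] by blast
  have gmin: "f z1 \<le> f y" for y
  proof -
    obtain r where r: "0 \<le> r" "r \<le> T" "f y = f r" using periodic_reduce[of f T y, OF f_periodic T] by blast
    show ?thesis
    proof (cases "z0 \<le> r")
      case True then show ?thesis using z1 r z0 by auto
    next
      case False
      then have "r + T \<in> {z0..z0+T}" using r z0 by auto
      then have "f z1 \<le> f (r + T)" using z1(2) by blast
      then show ?thesis using r f_periodic[of r] by simp
    qed
  qed
  have lt: "f z1 < f z0" using nc gmin by (meson le_less_trans)
  have "z1 \<noteq> z0" "z1 \<noteq> z0 + T" using lt f_periodic[of z0] by auto
  then have zz: "z0 < z1" "z1 < z0 + T" using z1 by auto
  have f1z1: "f1 z1 = 0" by (rule DERIV_local_min[OF df, of 1]) (use gmin in auto)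
  have "f1 (z0 + T) = 0" using f1_periodic[of z0] f1z0 by simp
  moreover have "f2 z0 \<noteq> 0" using f2_eq[of z0] gam_neg sz0 by simp
  ultimately show ?thesis using f1z0 zz f1z1 by blast
qed

lemma hill0: "hill (Q 0) f1 f2"
  unfolding hill_def Q_def using df1 df2 by (simp add: algebra_simps)

definition "hs lam a x0 y0 = (SOME p. hill (Q lam) (fst p) (snd p) \<and> fst p a = x0 \<and> snd p a = y0)"

lemma hs: "hill (Q lam) (fst (hs lam a x0 y0)) (snd (hs lam a x0 y0)) \<and> fst (hs lam a x0 y0) a = x0 \<and> snd (hs lam a x0 y0) a = y0"
proof -
  obtain x y where "hill (Q lam) x y \<and> x a = x0 \<and> y a = y0"
    using hill_exists[OF Q_cont Q_bound] by blast
  then have "\<exists>p. hill (Q lam) (fst p) (snd p) \<and> fst p a = x0 \<and> snd p a = y0" by (intro exI[of _ "(x,y)"]) simp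
  then show ?thesis unfolding hs_def by (rule someI_ex)
qed

lemma QK: "l \<in> {0..\<Lambda>} \<Longrightarrow> \<bar>Q l s\<bar> \<le> \<gamma>^2 * \<Lambda>^2 - \<gamma>"
proof -
  assume "l \<in> {0..\<Lambda>}"
  then have "l^2 \<le> \<Lambda>^2" by (intro power_mono) auto
  then have "\<gamma>^2 * l^2 \<le> \<gamma>^2 * \<Lambda>^2" by (intro mult_left_mono) auto
  then show ?thesis using Q_bound[of l s] by linarith
qed

end

context wave begin
lemma sol_bound:
  assumes h: "hill (Q l) x y" and l: "l \<in> {0..\<Lambda>}" and z: "\<bar>z - a\<bar> \<le> R"
  shows "\<bar>x z\<bar> \<le> 1 + ((x a)^2 + (y a)^2) * exp ((2 + (\<gamma>^2 * \<Lambda>^2 - \<gamma>)) * R)"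
    and "\<bar>y z\<bar> \<le> 1 + ((x a)^2 + (y a)^2) * exp ((2 + (\<gamma>^2 * \<Lambda>^2 - \<gamma>)) * R)"
proof -
  define K where "K = \<gamma>^2 * \<Lambda>^2 - \<gamma>"
  have bQ: "\<And>s. \<bar>Q l s\<bar> \<le> K" using QK[OF l] by (simp add: K_def)
  have K: "K \<ge> 0" using bQ[of 0] by simp
  have "(x z)^2 + (y z)^2 \<le> ((x a)^2 + (y a)^2) * exp ((2+K)*\<bar>z-a\<bar>)" by (rule hill_energy[OF h bQ])
  also have "\<dots> \<le> ((x a)^2 + (y a)^2) * exp ((2+K)*R)"
    using z K by (intro mult_left_mono) (auto intro!: mult_left_mono)
  finally have e: "(x z)^2 + (y z)^2 \<le> ((x a)^2 + (y a)^2) * exp ((2+K)*R)" .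
  show "\<bar>x z\<bar> \<le> 1 + ((x a)^2 + (y a)^2) * exp ((2 + (\<gamma>^2 * \<Lambda>^2 - \<gamma>)) * R)"
    using abs_le_sq[of "x z"] e zero_le_power2[of "y z"] unfolding K_def by linarith
  show "\<bar>y z\<bar> \<le> 1 + ((x a)^2 + (y a)^2) * exp ((2 + (\<gamma>^2 * \<Lambda>^2 - \<gamma>)) * R)"
    using abs_le_sq[of "y z"] e zero_le_power2[of "x z"] unfolding K_def by linarith
qed

lemma lip_lam:
  assumes L: "\<Lambda> \<ge> 0" and R: "R \<ge> 0"
  shows "\<exists>C\<ge>0. \<forall>l\<in>{0..\<Lambda>}. \<forall>m\<in>{0..\<Lambda>}. \<forall>z. \<bar>z - a\<bar> \<le> R \<longrightarrow>
     \<bar>fst (hs l a x0 y0) z - fst (hs m a x0 y0) z\<bar> \<le> C * \<bar>l - m\<bar> \<and>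
     \<bar>snd (hs l a x0 y0) z - snd (hs m a x0 y0) z\<bar> \<le> C * \<bar>l - m\<bar>"
proof -
  define K where "K = \<gamma>^2 * \<Lambda>^2 - \<gamma>"
  define B where "B = 1 + (x0^2 + y0^2) * exp ((2 + K) * R)"
  define C where "C = \<gamma>^2 * (2 * \<Lambda>) * B * sqrt (R * exp ((2+K)*R))"
  have K: "K \<ge> 0" using gam_neg zero_le_power2[of "\<gamma> * \<Lambda>"] unfolding K_def power_mult_distrib by linarith
  have B: "B \<ge> 0" by (simp add: B_def)
  have C: "C \<ge> 0" using L B R by (simp add: C_def)
  have "\<bar>fst (hs l a x0 y0) z - fst (hs m a x0 y0) z\<bar> \<le> C * \<bar>l - m\<bar> \<and>
     \<bar>snd (hs l a x0 y0) z - snd (hs m a x0 y0) z\<bar> \<le> C * \<bar>l - m\<bar>"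
    if l: "l \<in> {0..\<Lambda>}" and m: "m \<in> {0..\<Lambda>}" and z: "\<bar>z - a\<bar> \<le> R" for l m z
  proof -
    note h1 = hs[of l a x0 y0] and h2 = hs[of m a x0 y0]
    define x1 where "x1 = fst (hs l a x0 y0)"
    define y1 where "y1 = snd (hs l a x0 y0)"
    define x2 where "x2 = fst (hs m a x0 y0)"
    define y2 where "y2 = snd (hs m a x0 y0)"
    define \<beta> where "\<beta> = \<gamma>^2 * (2 * \<Lambda>) * B * \<bar>l - m\<bar>"
    have bQ: "\<And>s. \<bar>Q l s\<bar> \<le> K" using QK[OF l] by (simp add: K_def)
    have be: "\<beta> \<ge> 0" using L B by (simp add: \<beta>_def)
    have bd: "\<bar>(Q l s - Q m s) * x2 s\<bar> \<le> \<beta>" if s: "\<bar>s - a\<bar> \<le> \<bar>z - a\<bar>" for s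
    proof -
      have xb: "\<bar>x2 s\<bar> \<le> B" using sol_bound(1)[of m x2 y2 \<Lambda> s a R] h2 m s z
        by (simp add: x2_def y2_def B_def K_def)
      have "l^2 - m^2 = (l - m) * (l + m)" by (simp add: power2_eq_square algebra_simps)
      then have "\<bar>l^2 - m^2\<bar> = \<bar>l - m\<bar> * (l + m)" using l m by (simp add: abs_mult)
      also have "\<dots> \<le> \<bar>l - m\<bar> * (2 * \<Lambda>)" using l m by (intro mult_left_mono) auto
      finally have lm: "\<bar>l^2 - m^2\<bar> \<le> \<bar>l - m\<bar> * (2 * \<Lambda>)" .
      have "Q l s - Q m s = \<gamma>^2 * (l^2 - m^2)" by (simp add: Q_def algebra_simps)
      then have "\<bar>(Q l s - Q m s) * x2 s\<bar> = \<gamma>^2 * \<bar>l^2 - m^2\<bar> * \<bar>x2 s\<bar>"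
        by (simp add: abs_mult)
      also have "\<dots> \<le> \<gamma>^2 * (\<bar>l - m\<bar> * (2 * \<Lambda>)) * B"
        using lm xb L by (intro mult_mono mult_left_mono) auto
      finally show ?thesis by (simp add: \<beta>_def algebra_simps)
    qed
    have "(x1 z - x2 z)^2 + (y1 z - y2 z)^2 \<le> ((x1 a - x2 a)^2 + (y1 a - y2 a)^2 + \<beta>^2*\<bar>z-a\<bar>) * exp ((2+K)*\<bar>z-a\<bar>)"
      using hill_diff[of "Q l" x1 y1 "Q m" x2 y2 K \<beta> a z] h1 h2 K bQ be bd
      by (simp add: x1_def y1_def x2_def y2_def)
    also have "\<dots> = \<beta>^2*\<bar>z-a\<bar> * exp ((2+K)*\<bar>z-a\<bar>)" using h1 h2 by (simp add: x1_def y1_def x2_def y2_def)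
    also have "\<dots> \<le> \<beta>^2*R * exp ((2+K)*R)"
      using z K by (intro mult_mono mult_left_mono) auto
    also have "\<dots> = (C * \<bar>l - m\<bar>)^2"
      using R K by (simp add: C_def \<beta>_def power_mult_distrib)
    finally have sq: "(x1 z - x2 z)^2 + (y1 z - y2 z)^2 \<le> (C * \<bar>l - m\<bar>)^2" .
    have Cl: "0 \<le> C * \<bar>l - m\<bar>" using C by simp
    have q1: "(x1 z - x2 z)^2 \<le> (C*\<bar>l-m\<bar>)^2" using sq zero_le_power2[of "y1 z - y2 z"] by linarith
    have q2: "(y1 z - y2 z)^2 \<le> (C*\<bar>l-m\<bar>)^2" using sq zero_le_power2[of "x1 z - x2 z"] by linarith
    have "\<bar>x1 z - x2 z\<bar> \<le> C * \<bar>l - m\<bar>"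
      using power2_le_imp_le[of "\<bar>x1 z - x2 z\<bar>" "C*\<bar>l-m\<bar>"] q1 Cl by simp
    moreover have "\<bar>y1 z - y2 z\<bar> \<le> C * \<bar>l - m\<bar>"
      using power2_le_imp_le[of "\<bar>y1 z - y2 z\<bar>" "C*\<bar>l-m\<bar>"] q2 Cl by simp
    ultimately show ?thesis by (simp add: x1_def y1_def x2_def y2_def)
  qed
  then show ?thesis using C by blast
qed

lemma lip_z:
  shows "\<exists>L\<ge>0. \<forall>l\<in>{0..\<Lambda>}. \<forall>z z'. \<bar>z - a\<bar> \<le> R \<longrightarrow> \<bar>z' - a\<bar> \<le> R \<longrightarrow>
     \<bar>fst (hs l a x0 y0) z - fst (hs l a x0 y0) z'\<bar> \<le> L * \<bar>z - z'\<bar> \<and>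
     \<bar>snd (hs l a x0 y0) z - snd (hs l a x0 y0) z'\<bar> \<le> L * \<bar>z - z'\<bar>"
proof -
  define K where "K = \<gamma>^2 * \<Lambda>^2 - \<gamma>"
  define B where "B = 1 + (x0^2 + y0^2) * exp ((2 + K) * R)"
  define L where "L = (1 + K) * B"
  have K: "K \<ge> 0" using gam_neg zero_le_power2[of "\<gamma> * \<Lambda>"] unfolding K_def power_mult_distrib by linarith
  have B: "B \<ge> 0" by (simp add: B_def)
  have L: "L \<ge> B" "L \<ge> 0" using K B by (auto simp: L_def algebra_simps)
  have "\<bar>fst (hs l a x0 y0) z - fst (hs l a x0 y0) z'\<bar> \<le> L * \<bar>z - z'\<bar> \<and>
     \<bar>snd (hs l a x0 y0) z - snd (hs l a x0 y0) z'\<bar> \<le> L * \<bar>z - z'\<bar>"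
    if l: "l \<in> {0..\<Lambda>}" and z: "\<bar>z - a\<bar> \<le> R" "\<bar>z' - a\<bar> \<le> R" for l z z'
  proof -
    define x where "x = fst (hs l a x0 y0)"
    define y where "y = snd (hs l a x0 y0)"
    have h: "hill (Q l) x y" "x a = x0" "y a = y0" using hs[of l a x0 y0] by (auto simp: x_def y_def)
    have bQ: "\<And>s. \<bar>Q l s\<bar> \<le> K" using QK[OF l] by (simp add: K_def)
    have bx: "\<bar>x s\<bar> \<le> B" "\<bar>y s\<bar> \<le> B" if "\<bar>s - a\<bar> \<le> R" for s
      using sol_bound[OF h(1) l that] h by (simp_all add: B_def K_def)
    have inR: "\<bar>s - a\<bar> \<le> R" if "min z z' \<le> s" "s \<le> max z z'" for s using that z by (auto simp: abs_le_iff)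
    have "\<bar>x z - x z'\<bar> \<le> L * \<bar>z - z'\<bar>"
    proof (rule lip_deriv[of x y])
      show "(x has_real_derivative y s) (at s)" for s using h(1) by (simp add: hill_def)
      fix s assume "min z z' \<le> s" "s \<le> max z z'"
      then have "\<bar>y s\<bar> \<le> B" using bx inR by blast
      then show "\<bar>y s\<bar> \<le> L" using L by simp
    qed
    moreover have "\<bar>y z - y z'\<bar> \<le> L * \<bar>z - z'\<bar>"
    proof (rule lip_deriv[of y "\<lambda>s. Q l s * x s"])
      show "(y has_real_derivative Q l s * x s) (at s)" for s using h(1) by (simp add: hill_def)
      fix s assume "min z z' \<le> s" "s \<le> max z z'"
      then have "\<bar>x s\<bar> \<le> B" using bx inR by blast
      then have "\<bar>Q l s * x s\<bar> \<le> K * B" unfolding abs_mult using bQ[of s] K by (intro mult_mono) auto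
      then show "\<bar>Q l s * x s\<bar> \<le> L" using B by (simp add: L_def algebra_simps)
    qed
    ultimately show ?thesis unfolding x_def y_def by blast
  qed
  then show ?thesis using L by blast
qed

end


lemma sin_pos_imp: "\<bar>x\<bar> < pi \<Longrightarrow> sin x > 0 \<Longrightarrow> x > 0"
proof (rule ccontr)
  assume a: "\<bar>x\<bar> < pi" "sin x > 0" "\<not> x > 0"
  then have "0 \<le> -x" "-x \<le> pi" by auto
  then have "0 \<le> sin (-x)" by (rule sin_ge_zero)
  then show False using a by simp
qed

lemma sin_neg_imp: "\<bar>x\<bar> < pi \<Longrightarrow> sin x < 0 \<Longrightarrow> x < 0"
  using sin_pos_imp[of "-x"] by simp

lemma stays_above:
  fixes \<phi> :: "real \<Rightarrow> real"
  assumes ab: "a \<le> b" and cont: "continuous_on {a..b} \<phi>" and start: "\<phi> a \<ge> c"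
    and cross: "\<And>s. s \<in> {a..b} \<Longrightarrow> \<phi> s = c \<Longrightarrow> \<exists>d>0. (\<forall>t\<in>{a..b}. s < t \<and> t < s + d \<longrightarrow> \<phi> t > c) \<and> (\<forall>t\<in>{a..b}. s - d < t \<and> t < s \<longrightarrow> \<phi> t < c)"
  shows "\<forall>t\<in>{a<..b}. \<phi> t > c"
proof -
  have contat: "\<exists>d>0. \<forall>t\<in>{a..b}. \<bar>t - r\<bar> < d \<longrightarrow> \<bar>\<phi> t - \<phi> r\<bar> < e" if "r \<in> {a..b}" "e > 0" for r e
    using cont that unfolding continuous_on_iff dist_real_def by blast
  have init: "\<exists>d>0. \<forall>t\<in>{a..b}. a < t \<and> t < a + d \<longrightarrow> \<phi> t > c"
  proof (cases "\<phi> a = c")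
    case True then show ?thesis using cross[of a] ab by auto
  next
    case False
    then have "\<phi> a - c > 0" using start by simp
    then obtain d where d: "d > 0" "\<forall>t\<in>{a..b}. \<bar>t - a\<bar> < d \<longrightarrow> \<bar>\<phi> t - \<phi> a\<bar> < \<phi> a - c"
      using contat[of a "\<phi> a - c"] ab by auto
    show ?thesis by (rule exI[of _ d]) (use d in \<open>auto simp: abs_less_iff\<close>)
  qed
  have left: "\<exists>d>0. \<forall>t\<in>{a..b}. r - d < t \<and> t < r \<longrightarrow> \<phi> t < c" if r: "r \<in> {a..b}" "\<phi> r \<le> c" for r
  proof (cases "\<phi> r = c")
    case True then show ?thesis using cross[of r] r by blast
  next
    case False
    then have "c - \<phi> r > 0" using r by simp
    then obtain d where d: "d > 0" "\<forall>t\<in>{a..b}. \<bar>t - r\<bar> < d \<longrightarrow> \<bar>\<phi> t - \<phi> r\<bar> < c - \<phi> r"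
      using contat[of r "c - \<phi> r"] r by auto
    show ?thesis by (rule exI[of _ d]) (use d in \<open>auto simp: abs_less_iff\<close>)
  qed
  obtain d where d: "d > 0" "\<forall>t\<in>{a..b}. a < t \<and> t < a + d \<longrightarrow> \<phi> t > c" using init by blast
  show ?thesis
  proof
    fix t assume t: "t \<in> {a<..b}"
    show "\<phi> t > c"
    proof (cases "t < a + d")
      case True then show ?thesis using d t by auto
    next
      case False
      define a' where "a' = a + d/2"
      have a': "a < a'" "a' < t" "a' \<le> b" using d False t by (auto simp: a'_def)
      have pa': "\<phi> a' > c" using d a' by (auto simp: a'_def)
      have "\<forall>r\<in>{a'..t}. \<phi> r - c > 0"
      proof (rule first_fail)
        show "a' \<le> t" using a' by simp
        show "continuous_on {a'..t} (\<lambda>r. \<phi> r - c)"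
          by (intro continuous_intros continuous_on_subset[OF cont]) (use a' t in auto)
        show "\<phi> a' - c > 0" using pa' by simp
        fix r assume r: "a' \<le> r" "r \<le> t" and pos: "\<And>q. a' \<le> q \<Longrightarrow> q < r \<Longrightarrow> \<phi> q - c > 0"
        show "\<phi> r - c > 0"
        proof (rule ccontr)
          assume "\<not> \<phi> r - c > 0"
          then have rc: "\<phi> r \<le> c" by simp
          then have "r \<noteq> a'" using pa' by auto
          then have ra: "a' < r" using r by simp
          obtain e where e: "e > 0" "\<forall>q\<in>{a..b}. r - e < q \<and> q < r \<longrightarrow> \<phi> q < c"
            using left[of r] rc r a' t by auto
          define q where "q = max a' (r - e/2)"
          have "q \<in> {a..b}" "r - e < q" "q < r" "a' \<le> q" using ra e a' r t by (auto simp: q_def)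
          then show False using e pos[of q] by force
        qed
      qed
      then show ?thesis using a' by auto
    qed
  qed
qed

locale wave2 = wave +
  fixes z0 z1 :: real
  assumes zz: "f1 z0 = 0" "z0 < z1" "z1 < z0 + T" "f1 z1 = 0" "f1 (z0 + T) = 0" "f2 z0 \<noteq> 0"
begin

definition "Lb = 1 + (1 + 2/T) / ((-\<gamma>) * (1 - \<bar>c\<bar>))"
definition "v l = fst (hs l z0 0 1)"
definition "v' l = snd (hs l z0 0 1)"
definition "u l = fst (hs l z0 1 0)"
definition "u' l = snd (hs l z0 1 0)"
definition "Rect = {z0..z0+T} \<times> {0..Lb}"
definition "Zc p = Complex (v' (snd p) (fst p)) (v (snd p) (fst p))"

lemma cabs: "\<bar>c\<bar> < 1" using c1 abs_square_less_1 by blast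

lemma Lb_gt1: "Lb > 1"
proof -
  have "0 < -\<gamma>" "0 < 1 - \<bar>c\<bar>" using gam_neg cabs by auto
  then have m: "(-\<gamma>) * (1 - \<bar>c\<bar>) > 0" by (rule mult_pos_pos)
  have "2/T > 0" using T by simp
  then have "1 + 2/T > 0" by linarith
  then have "(1 + 2/T) / ((-\<gamma>) * (1 - \<bar>c\<bar>)) > 0" using m by (intro divide_pos_pos)
  then show ?thesis unfolding Lb_def by linarith
qed

lemma hv: "hill (Q l) (v l) (v' l)" "v l z0 = 0" "v' l z0 = 1"
  using hs[of l z0 0 1] by (auto simp: v_def v'_def)

lemma hu: "hill (Q l) (u l) (u' l)" "u l z0 = 1" "u' l z0 = 0"
  using hs[of l z0 1 0] by (auto simp: u_def u'_def)

lemma v_nonzero: "\<not> (v l z = 0 \<and> v' l z = 0)"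
proof
  assume a: "v l z = 0 \<and> v' l z = 0"
  have "v l z0 = 0 \<and> v' l z0 = 0"
    using hill_unique[OF hv(1)[of l] hill_zero Q_bound, of z z0] a by simp
  then show False using hv(3) by simp
qed

lemma Zc_nonzero: "Zc p \<noteq> 0"
  using v_nonzero[of "snd p" "fst p"] by (auto simp: Zc_def complex_eq_iff)

lemma Zc_cont: "continuous_on Rect Zc"
proof -
  have L0: "Lb \<ge> 0" "T \<ge> 0" using Lb_gt1 T by auto
  obtain C where C: "C \<ge> 0" "\<forall>l\<in>{0..Lb}. \<forall>m\<in>{0..Lb}. \<forall>z. \<bar>z - z0\<bar> \<le> T \<longrightarrow>
     \<bar>fst (hs l z0 0 1) z - fst (hs m z0 0 1) z\<bar> \<le> C * \<bar>l - m\<bar> \<and>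
     \<bar>snd (hs l z0 0 1) z - snd (hs m z0 0 1) z\<bar> \<le> C * \<bar>l - m\<bar>"
    using lip_lam[OF L0, of z0 0 1] by blast
  obtain L where L: "L \<ge> 0" "\<forall>l\<in>{0..Lb}. \<forall>z z'. \<bar>z - z0\<bar> \<le> T \<longrightarrow> \<bar>z' - z0\<bar> \<le> T \<longrightarrow>
     \<bar>fst (hs l z0 0 1) z - fst (hs l z0 0 1) z'\<bar> \<le> L * \<bar>z - z'\<bar> \<and>
     \<bar>snd (hs l z0 0 1) z - snd (hs l z0 0 1) z'\<bar> \<le> L * \<bar>z - z'\<bar>"
    using lip_z[of Lb z0 T 0 1] by blast
  have "(2 * (L + C))-lipschitz_on Rect Zc"
  proof (rule lipschitz_onI)
    show "0 \<le> 2 * (L + C)" using L C by simp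
    fix p q assume p: "p \<in> Rect" and q: "q \<in> Rect"
    obtain z l where pz: "p = (z, l)" by (cases p)
    obtain z' m where qz: "q = (z', m)" by (cases q)
    have zl: "\<bar>z - z0\<bar> \<le> T" "\<bar>z' - z0\<bar> \<le> T" "l \<in> {0..Lb}" "m \<in> {0..Lb}"
      using p q by (auto simp: Rect_def pz qz)
    have d1: "\<bar>z - z'\<bar> \<le> dist p q" using dist_fst_le[of p q] by (simp add: pz qz dist_real_def)
    have d2: "\<bar>l - m\<bar> \<le> dist p q" using dist_snd_le[of p q] by (simp add: pz qz dist_real_def)
    have e1: "\<bar>v l z - v m z'\<bar> \<le> L * \<bar>z - z'\<bar> + C * \<bar>l - m\<bar>"
    proof -
      have "\<bar>v l z - v l z'\<bar> \<le> L * \<bar>z - z'\<bar>" using L(2) zl by (simp add: v_def)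
      moreover have "\<bar>v l z' - v m z'\<bar> \<le> C * \<bar>l - m\<bar>" using C(2) zl by (simp add: v_def)
      ultimately show ?thesis by linarith
    qed
    have e2: "\<bar>v' l z - v' m z'\<bar> \<le> L * \<bar>z - z'\<bar> + C * \<bar>l - m\<bar>"
    proof -
      have "\<bar>v' l z - v' l z'\<bar> \<le> L * \<bar>z - z'\<bar>" using L(2) zl by (simp add: v'_def)
      moreover have "\<bar>v' l z' - v' m z'\<bar> \<le> C * \<bar>l - m\<bar>" using C(2) zl by (simp add: v'_def)
      ultimately show ?thesis by linarith
    qed
    have "L * \<bar>z - z'\<bar> + C * \<bar>l - m\<bar> \<le> (L + C) * dist p q"
      using mult_left_mono[OF d1 L(1)] mult_left_mono[OF d2 C(1)] by (simp add: algebra_simps)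
    moreover have "dist (Zc p) (Zc q) \<le> \<bar>v' l z - v' m z'\<bar> + \<bar>v l z - v m z'\<bar>"
      using cmod_le[of "Zc p - Zc q"] by (simp add: dist_norm Zc_def pz qz)
    ultimately show "dist (Zc p) (Zc q) \<le> 2 * (L + C) * dist p q" using e1 e2 by linarith
  qed
  then show ?thesis by (rule lipschitz_on_continuous_on)
qed

lemma Rect_contractible: "contractible Rect"
  unfolding Rect_def by (intro convex_imp_contractible convex_Times convex_real_interval)

definition "Gl = (SOME G. continuous_on Rect G \<and> (\<forall>p\<in>Rect. Zc p = exp (G p)))"

lemma Gl: "continuous_on Rect Gl" "\<And>p. p \<in> Rect \<Longrightarrow> Zc p = exp (Gl p)"
proof -
  obtain G where "continuous_on Rect G" "\<And>p. p \<in> Rect \<Longrightarrow> Zc p = exp (G p)"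
    using continuous_logarithm_on_contractible[OF Zc_cont Rect_contractible Zc_nonzero] by blast
  then have "\<exists>G. continuous_on Rect G \<and> (\<forall>p\<in>Rect. Zc p = exp (G p))" by blast
  from someI_ex[OF this] show "continuous_on Rect Gl" "\<And>p. p \<in> Rect \<Longrightarrow> Zc p = exp (Gl p)"
    unfolding Gl_def by blast+
qed

definition "\<theta> z l = Im (Gl (z, l))"
definition "\<rho> z l = exp (Re (Gl (z, l)))"

lemma rho_pos: "\<rho> z l > 0" by (simp add: \<rho>_def)

lemma polar: "z \<in> {z0..z0+T} \<Longrightarrow> l \<in> {0..Lb} \<Longrightarrow> v' l z = \<rho> z l * cos (\<theta> z l) \<and> v l z = \<rho> z l * sin (\<theta> z l)"
proof -
  assume "z \<in> {z0..z0+T}" "l \<in> {0..Lb}"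
  then have "(z, l) \<in> Rect" by (simp add: Rect_def)
  then have "Zc (z,l) = exp (Gl (z,l))" by (rule Gl(2))
  then have "Re (Zc (z,l)) = Re (exp (Gl (z,l)))" "Im (Zc (z,l)) = Im (exp (Gl (z,l)))" by simp_all
  then show ?thesis by (simp add: Zc_def Re_exp Im_exp \<rho>_def \<theta>_def)
qed

lemma theta_cont_z: "l \<in> {0..Lb} \<Longrightarrow> continuous_on {z0..z0+T} (\<lambda>z. \<theta> z l)"
  unfolding \<theta>_def
  by (rule continuous_on_compose2[OF continuous_on_Im[OF Gl(1)]]) (auto intro!: continuous_intros simp: Rect_def)

lemma theta_cont_l: "z \<in> {z0..z0+T} \<Longrightarrow> continuous_on {0..Lb} (\<lambda>l. \<theta> z l)"
  unfolding \<theta>_def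
  by (rule continuous_on_compose2[OF continuous_on_Im[OF Gl(1)]]) (auto intro!: continuous_intros simp: Rect_def)

lemma z0_in: "z0 \<in> {z0..z0+T}" "z0 + T \<in> {z0..z0+T}" using T by auto

lemma base_cos: "l \<in> {0..Lb} \<Longrightarrow> cos (\<theta> z0 l) = 1"
proof -
  assume l: "l \<in> {0..Lb}"
  have p: "\<rho> z0 l * cos (\<theta> z0 l) = 1" "\<rho> z0 l * sin (\<theta> z0 l) = 0"
    using polar[OF z0_in(1) l] hv[of l] by auto
  have "0 < \<rho> z0 l * cos (\<theta> z0 l)" using p by simp
  then have "cos (\<theta> z0 l) > 0" using rho_pos[of z0 l] by (auto simp: zero_less_mult_iff)
  moreover have "sin (\<theta> z0 l) = 0" using p(2) rho_pos[of z0 l] by simp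
  moreover have "(sin (\<theta> z0 l))^2 + (cos (\<theta> z0 l))^2 = 1" by simp
  ultimately have cs: "(cos (\<theta> z0 l))^2 = 1" by simp
  show ?thesis using cs \<open>cos (\<theta> z0 l) > 0\<close> by (auto simp: power2_eq_1_iff)
qed

definition "\<theta>0 = \<theta> z0 0"

lemma Lb_in: "0 \<in> {0..Lb}" "Lb \<in> {0..Lb}" using Lb_gt1 by auto

lemma base: "l \<in> {0..Lb} \<Longrightarrow> \<theta> z0 l = \<theta>0"
proof (rule ccontr)
  assume l: "l \<in> {0..Lb}" and ne: "\<theta> z0 l \<noteq> \<theta>0"
  obtain k :: int where k: "\<theta> z0 l = of_int k * 2 * pi" using base_cos[OF l] cos_one_2pi_int by blast
  obtain k0 :: int where k0: "\<theta>0 = of_int k0 * 2 * pi" using base_cos[OF Lb_in(1)] cos_one_2pi_int \<theta>0_def by metis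
  have kk: "k \<noteq> k0" using ne k k0 by auto
  have cl: "continuous_on {0..l} (\<lambda>m. \<theta> z0 m)"
    by (rule continuous_on_subset[OF theta_cont_l[OF z0_in(1)]]) (use l in auto)
  have l0: "0 \<le> l" using l by simp
  show False
  proof (cases "k > k0")
    case True
    then have "real_of_int k \<ge> k0 + 1" by simp
    then have "(real_of_int k0 + 1) * (2 * pi) \<le> real_of_int k * (2*pi)" by (intro mult_right_mono) auto
    then have "\<theta> z0 l \<ge> \<theta>0 + 2 * pi" unfolding k k0 by (simp add: algebra_simps)
    then obtain m where m: "0 \<le> m" "m \<le> l" "\<theta> z0 m = \<theta>0 + pi"
      using IVT'[of "\<lambda>m. \<theta> z0 m" 0 "\<theta>0 + pi" l] cl l0 pi_gt_zero by (auto simp: \<theta>0_def)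
    have "cos (\<theta> z0 m) = 1" using base_cos[of m] m l by auto
    moreover have "cos (\<theta>0 + pi) = -1" using base_cos[OF Lb_in(1)] by (simp add: \<theta>0_def)
    ultimately show False using m by simp
  next
    case False
    then have "real_of_int k \<le> k0 - 1" using kk by simp
    then have "real_of_int k * (2*pi) \<le> (real_of_int k0 - 1) * (2 * pi)" by (intro mult_right_mono) auto
    then have "\<theta> z0 l \<le> \<theta>0 - 2 * pi" unfolding k k0 by (simp add: algebra_simps)
    then obtain m where m: "0 \<le> m" "m \<le> l" "\<theta> z0 m = \<theta>0 - pi"
      using IVT2'[of "\<lambda>m. \<theta> z0 m" l "\<theta>0 - pi" 0] cl l0 pi_gt_zero by (auto simp: \<theta>0_def)
    have "cos (\<theta> z0 m) = 1" using base_cos[of m] m l by auto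
    moreover have "cos (\<theta>0 - pi) = -1" using base_cos[OF Lb_in(1)] by (simp add: \<theta>0_def)
    ultimately show False using m by simp
  qed
qed

end


context wave2 begin

lemma dv: "(v l has_real_derivative v' l z) (at z)" "(v' l has_real_derivative Q l z * v l z) (at z)"
  using hv(1)[of l] unfolding hill_def by auto

lemma du: "(u l has_real_derivative u' l z) (at z)" "(u' l has_real_derivative Q l z * u l z) (at z)"
  using hu(1)[of l] unfolding hill_def by auto

lemma cross:
  assumes l: "l \<in> {0..Lb}" and s: "s \<in> {z0..z0+T}" and sc: "sin cc0 = 0" and ts: "\<theta> s l = cc0"
  shows "\<exists>d>0. (\<forall>t\<in>{z0..z0+T}. s < t \<and> t < s + d \<longrightarrow> \<theta> t l > cc0) \<and> (\<forall>t\<in>{z0..z0+T}. s - d < t \<and> t < s \<longrightarrow> \<theta> t l < cc0)"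
proof -
  have vs: "v l s = 0" using polar[OF s l] ts sc by simp
  define w where "w = v' l s"
  have w: "w = \<rho> s l * cos cc0" using polar[OF s l] ts by (simp add: w_def)
  have cc: "(cos cc0)^2 = 1" using sc sin_cos_squared_add[of cc0] by simp
  have w0: "w \<noteq> 0" using w cc rho_pos[of s l] by auto
  have dvw: "((\<lambda>t. v l t * w) has_real_derivative w * w) (at s)"
    using dv(1)[of l s] unfolding w_def by (auto intro!: derivative_eq_intros)
  have ww: "w * w > 0" using w0 not_real_square_gt_zero by blast
  obtain d1 where d1: "d1 > 0" "\<forall>h>0. h < d1 \<longrightarrow> v l s * w < v l (s+h) * w"
    using DERIV_pos_inc_right[OF dvw ww] by blast
  obtain d2 where d2: "d2 > 0" "\<forall>h>0. h < d2 \<longrightarrow> v l (s-h) * w < v l s * w"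
    using DERIV_pos_inc_left[OF dvw ww] by blast
  obtain d3 where d3: "d3 > 0" "\<forall>t\<in>{z0..z0+T}. \<bar>t - s\<bar> < d3 \<longrightarrow> \<bar>\<theta> t l - \<theta> s l\<bar> < pi"
    using theta_cont_z[OF l] s pi_gt_zero unfolding continuous_on_iff dist_real_def by blast
  have key: "v l t * w = \<rho> t l * \<rho> s l * sin (\<theta> t l - cc0)" if t: "t \<in> {z0..z0+T}" for t
  proof -
    have "sin (\<theta> t l) = sin (\<theta> t l - cc0) * cos cc0"
      using sin_add[of "\<theta> t l - cc0" cc0] sc by simp
    then have "v l t * w = \<rho> t l * (sin (\<theta> t l - cc0) * cos cc0) * (\<rho> s l * cos cc0)"
      using polar[OF t l] w by simp
    also have "\<dots> = \<rho> t l * \<rho> s l * sin (\<theta> t l - cc0) * (cos cc0)^2" by (simp add: power2_eq_square)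
    finally show ?thesis using cc by simp
  qed
  have rr: "\<rho> t l * \<rho> s l > 0" for t using rho_pos by simp
  define d where "d = min d1 (min d2 d3)"
  have "d > 0" using d1 d2 d3 by (simp add: d_def)
  moreover have "\<theta> t l > cc0" if t: "t \<in> {z0..z0+T}" "s < t" "t < s + d" for t
  proof -
    have "v l s * w < v l (s + (t - s)) * w" using d1(2)[rule_format, of "t - s"] t by (auto simp: d_def)
    then have "0 < v l t * w" using vs by simp
    then have "0 < \<rho> t l * \<rho> s l * sin (\<theta> t l - cc0)" using key[OF t(1)] by simp
    then have "sin (\<theta> t l - cc0) > 0" using rr[of t] by (simp add: zero_less_mult_iff)
    moreover have "\<bar>\<theta> t l - cc0\<bar> < pi" using d3 t ts by (auto simp: d_def)
    ultimately show ?thesis using sin_pos_imp by force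
  qed
  moreover have "\<theta> t l < cc0" if t: "t \<in> {z0..z0+T}" "s - d < t" "t < s" for t
  proof -
    have "v l (s - (s - t)) * w < v l s * w" using d2(2)[rule_format, of "s - t"] t by (auto simp: d_def)
    then have "v l t * w < 0" using vs by simp
    then have "\<rho> t l * \<rho> s l * sin (\<theta> t l - cc0) < 0" using key[OF t(1)] by simp
    then have "sin (\<theta> t l - cc0) < 0" using rho_pos[of t l] rho_pos[of s l] by (simp add: mult_less_0_iff)
    moreover have "\<bar>\<theta> t l - cc0\<bar> < pi" using d3 t ts by (auto simp: d_def)
    ultimately show ?thesis using sin_neg_imp by force
  qed
  ultimately show ?thesis by blast
qed

lemma v0: "v 0 z = (1 / f2 z0) * f1 z"
proof -
  have h: "hill (Q 0) (\<lambda>z. (1 / f2 z0) * f1 z) (\<lambda>z. (1 / f2 z0) * f2 z)" by (rule hill_scale[OF hill0])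
  show ?thesis using hill_unique[OF hv(1)[of 0] h Q_bound, of z0 z] hv zz by simp
qed

lemma sin_zero_theta: "z \<in> {z0..z0+T} \<Longrightarrow> l \<in> {0..Lb} \<Longrightarrow> v l z = 0 \<Longrightarrow> sin (\<theta> z l) = 0"
  using polar[of z l] rho_pos[of z l] by simp

lemma int_step:
  fixes m n :: int
  assumes "real_of_int n * pi < real_of_int m * pi"
  shows "(real_of_int n + 1) * pi \<le> real_of_int m * pi"
proof -
  have "real_of_int n < real_of_int m" using assms by simp
  then have "n + 1 \<le> m" by simp
  then have "real_of_int n + 1 \<le> real_of_int m" by linarith
  then show ?thesis by (intro mult_right_mono) auto
qed

lemma left_edge: "\<theta> (z0 + T) 0 \<ge> \<theta>0 + 2 * pi"
proof -
  have l0: "(0::real) \<in> {0..Lb}" using Lb_in by simp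
  obtain k0 :: int where k0: "\<theta>0 = of_int k0 * 2 * pi" using base_cos[OF l0] cos_one_2pi_int \<theta>0_def by metis
  have s0: "sin \<theta>0 = 0" using k0 sin_zero_iff_int2 by (metis mult.commute mult.left_commute of_int_mult of_int_numeral)
  have z1in: "z1 \<in> {z0..z0+T}" using zz by auto
  have A: "\<forall>t\<in>{z0<..z0+T}. \<theta> t 0 > \<theta>0"
  proof (rule stays_above)
    show "z0 \<le> z0 + T" using T by simp
    show "continuous_on {z0..z0+T} (\<lambda>z. \<theta> z 0)" by (rule theta_cont_z[OF l0])
    show "\<theta> z0 0 \<ge> \<theta>0" by (simp add: \<theta>0_def)
    fix s assume "s \<in> {z0..z0+T}" "\<theta> s 0 = \<theta>0"
    then show "\<exists>d>0. (\<forall>t\<in>{z0..z0+T}. s < t \<and> t < s + d \<longrightarrow> \<theta> t 0 > \<theta>0) \<and> (\<forall>t\<in>{z0..z0+T}. s - d < t \<and> t < s \<longrightarrow> \<theta> t 0 < \<theta>0)"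
      using cross[OF l0 _ s0] by blast
  qed
  have "v 0 z1 = 0" using v0 zz by simp
  then have "sin (\<theta> z1 0) = 0" using sin_zero_theta[OF z1in l0] by simp
  then obtain m :: int where m: "\<theta> z1 0 = of_int m * pi" using sin_zero_iff_int2 by blast
  have "\<theta> z1 0 > \<theta>0" using A zz by auto
  then have lt: "real_of_int (2*k0) * pi < real_of_int m * pi" using k0 m by (simp add: algebra_simps)
  have m1: "(real_of_int (2*k0) + 1) * pi \<le> \<theta> z1 0" using int_step[OF lt] unfolding m .
  have B: "\<forall>t\<in>{z1<..z0+T}. \<theta> t 0 > \<theta> z1 0"
  proof (rule stays_above)
    show "z1 \<le> z0 + T" using zz by simp
    show "continuous_on {z1..z0+T} (\<lambda>z. \<theta> z 0)" by (rule continuous_on_subset[OF theta_cont_z[OF l0]]) (use zz in auto)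
    show "\<theta> z1 0 \<ge> \<theta> z1 0" by simp
    fix s assume s: "s \<in> {z1..z0+T}" "\<theta> s 0 = \<theta> z1 0"
    have sin1: "sin (\<theta> z1 0) = 0" using \<open>sin (\<theta> z1 0) = 0\<close> .
    have "s \<in> {z0..z0+T}" using s zz by auto
    from cross[OF l0 this sin1 s(2)] obtain d where d: "d > 0"
      "\<forall>t\<in>{z0..z0+T}. s < t \<and> t < s + d \<longrightarrow> \<theta> t 0 > \<theta> z1 0"
      "\<forall>t\<in>{z0..z0+T}. s - d < t \<and> t < s \<longrightarrow> \<theta> t 0 < \<theta> z1 0" by blast
    then show "\<exists>d>0. (\<forall>t\<in>{z1..z0+T}. s < t \<and> t < s + d \<longrightarrow> \<theta> t 0 > \<theta> z1 0) \<and> (\<forall>t\<in>{z1..z0+T}. s - d < t \<and> t < s \<longrightarrow> \<theta> t 0 < \<theta> z1 0)"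
      using zz by (intro exI[of _ d]) auto
  qed
  have "\<theta> (z0+T) 0 > \<theta> z1 0" using B zz by auto
  moreover have "v 0 (z0+T) = 0" using v0 zz by simp
  then have "sin (\<theta> (z0+T) 0) = 0" using sin_zero_theta[OF z0_in(2) l0] by simp
  then obtain m' :: int where m': "\<theta> (z0+T) 0 = of_int m' * pi" using sin_zero_iff_int2 by blast
  ultimately have lt2: "real_of_int m * pi < real_of_int m' * pi" using m by simp
  have "(real_of_int m + 1) * pi \<le> \<theta> (z0+T) 0" using int_step[OF lt2] unfolding m' .
  moreover have "(real_of_int (2*k0) + 1) * pi \<le> real_of_int m * pi" using m1 m by simp
  ultimately show ?thesis using k0 by (simp add: algebra_simps)
qed

lemma Q_Lb_pos: "Q Lb z > 0"
proof -
  have "\<gamma>^2 * Lb^2 > \<gamma>^2"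
  proof -
    have "Lb^2 > 1" using Lb_gt1 by (simp add: one_less_power)
    moreover have "\<gamma>^2 > 0" using gam_neg by simp
    ultimately show ?thesis by simp
  qed
  moreover have "\<gamma>^2 \<ge> - \<gamma>"
  proof -
    have "(-\<gamma>)*1 \<le> (-\<gamma>)*(-\<gamma>)" using gam_ge1 gam_neg by (intro mult_left_mono) auto
    then show ?thesis by (simp add: power2_eq_square)
  qed
  moreover have "- \<gamma> * cos (f z) \<ge> \<gamma>"
  proof -
    have "(-\<gamma>)*(-1) \<le> (-\<gamma>)*cos (f z)" using gam_neg cos_ge_minus_one[of "f z"] by (intro mult_left_mono) auto
    then show ?thesis by simp
  qed
  ultimately show ?thesis unfolding Q_def by linarith
qed

lemma vLb_pos: "\<forall>t\<in>{z0..z0+T}. v' Lb t > 0"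
proof (rule first_fail)
  show "z0 \<le> z0 + T" using T by simp
  show "continuous_on {z0..z0+T} (v' Lb)" by (rule deriv_cont[OF dv(2)])
  show "v' Lb z0 > 0" using hv by simp
  fix t assume t: "z0 \<le> t" "t \<le> z0 + T" and pos: "\<And>r. z0 \<le> r \<Longrightarrow> r < t \<Longrightarrow> v' Lb r > 0"
  have vnn: "v Lb r \<ge> 0" if r: "z0 \<le> r" "r \<le> t" for r
  proof -
    have "v Lb z0 \<le> v Lb r"
    proof (rule DERIV_nonneg_imp_increasing_open[OF r(1)])
      fix x assume "z0 < x" "x < r"
      then show "\<exists>y. (v Lb has_real_derivative y) (at x) \<and> 0 \<le> y"
        using dv(1) pos[of x] r by (intro exI[of _ "v' Lb x"]) auto
    qed (rule deriv_cont[OF dv(1)])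
    then show ?thesis using hv by simp
  qed
  have "v' Lb z0 \<le> v' Lb t"
  proof (rule DERIV_nonneg_imp_increasing_open[OF t(1)])
    fix x assume x: "z0 < x" "x < t"
    have "Q Lb x * v Lb x \<ge> 0" using Q_Lb_pos[of x] vnn[of x] x by simp
    then show "\<exists>y. (v' Lb has_real_derivative y) (at x) \<and> 0 \<le> y"
      using dv(2) by blast
  qed (rule deriv_cont[OF dv(2)])
  then show "v' Lb t > 0" using hv by simp
qed

lemma right_edge: "\<theta> (z0 + T) Lb < \<theta>0 + pi/2"
proof (rule ccontr)
  assume "\<not> ?thesis"
  then have ge: "\<theta>0 + pi/2 \<le> \<theta> (z0+T) Lb" by simp
  have l: "Lb \<in> {0..Lb}" by (rule Lb_in)
  obtain z where z: "z0 \<le> z" "z \<le> z0 + T" "\<theta> z Lb = \<theta>0 + pi/2"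
    using IVT'[of "\<lambda>z. \<theta> z Lb" z0 "\<theta>0 + pi/2" "z0+T"] ge theta_cont_z[OF l] base[OF l] T by auto
  have "v' Lb z > 0" using vLb_pos z by auto
  then have "cos (\<theta> z Lb) > 0" using polar[of z Lb] z l rho_pos[of z Lb] by (auto simp: zero_less_mult_iff)
  moreover have "sin \<theta>0 = 0"
  proof -
    have "cos \<theta>0 = 1" using base_cos[OF Lb_in(1)] by (simp add: \<theta>0_def)
    then show ?thesis using sin_cos_squared_add[of \<theta>0] by simp
  qed
  ultimately show False using z by (simp add: cos_add)
qed

lemma lamD: "\<exists>lD. 0 < lD \<and> lD \<le> Lb \<and> v lD (z0+T) = 0 \<and> v' lD (z0+T) < 0"
proof -
  have c: "continuous_on {0..Lb} (\<lambda>l. \<theta> (z0+T) l)" by (rule theta_cont_l[OF z0_in(2)])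
  have "\<theta> (z0+T) Lb \<le> \<theta>0 + pi" "\<theta>0 + pi \<le> \<theta> (z0+T) 0"
    using right_edge left_edge pi_gt_zero by linarith+
  then obtain lD where lD: "0 \<le> lD" "lD \<le> Lb" "\<theta> (z0+T) lD = \<theta>0 + pi"
    using IVT2'[of "\<lambda>l. \<theta> (z0+T) l" Lb "\<theta>0 + pi" 0] c Lb_gt1 by auto
  have "lD \<noteq> 0" using lD(3) left_edge pi_gt_zero by auto
  then have pos: "0 < lD" using lD by simp
  have l: "lD \<in> {0..Lb}" using lD by simp
  have cs: "cos \<theta>0 = 1" "sin \<theta>0 = 0"
    using base_cos[OF Lb_in(1)] sin_cos_squared_add[of \<theta>0] by (simp_all add: \<theta>0_def)
  have "v lD (z0+T) = 0" "v' lD (z0+T) < 0"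
    using polar[OF z0_in(2) l] lD(3) cs rho_pos[of "z0+T" lD] by simp_all
  then show ?thesis using pos lD by blast
qed

end


lemma lip_cont:
  fixes F :: "real \<Rightarrow> real"
  assumes "C \<ge> 0" "\<And>l m. l \<in> S \<Longrightarrow> m \<in> S \<Longrightarrow> \<bar>F l - F m\<bar> \<le> C * \<bar>l - m\<bar>"
  shows "continuous_on S F"
  by (rule lipschitz_on_continuous_on[of C], rule lipschitz_onI) (use assms in \<open>auto simp: dist_real_def\<close>)

context wave2 begin

lemma wronsk: "u l z * v' l z - u' l z * v l z = 1"
proof -
  have "((\<lambda>z. u l z * v' l z - u' l z * v l z) has_real_derivative 0) (at x)" for x
  proof -
    have "((\<lambda>z. u l z * v' l z - u' l z * v l z) has_real_derivative
       (u' l x * v' l x + u l x * (Q l x * v l x) - (Q l x * u l x * v l x + u' l x * v' l x))) (at x)"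
      using du[of l x] dv[of l x] by (auto intro!: derivative_eq_intros)
    then show ?thesis by (simp add: algebra_simps)
  qed
  then have d0: "\<forall>x. ((\<lambda>z. u l z * v' l z - u' l z * v l z) has_real_derivative 0) (at x)" by blast
  have "u l z * v' l z - u' l z * v l z = u l z0 * v' l z0 - u' l z0 * v l z0"
    using DERIV_isconst_all[OF d0, of z z0] by simp
  then show ?thesis using hu hv by simp
qed

definition "Dl l = u l (z0+T) + v' l (z0+T) - (exp (c*\<gamma>*l*T) + exp (-(c*\<gamma>*l*T)))"

lemma Dl_cont: "continuous_on {0..Lb} Dl"
proof -
  have L0: "Lb \<ge> 0" "T \<ge> 0" using Lb_gt1 T by auto
  obtain C1 where C1: "C1 \<ge> 0" "\<forall>l\<in>{0..Lb}. \<forall>m\<in>{0..Lb}. \<forall>z. \<bar>z - z0\<bar> \<le> T \<longrightarrow>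
     \<bar>fst (hs l z0 1 0) z - fst (hs m z0 1 0) z\<bar> \<le> C1 * \<bar>l - m\<bar> \<and>
     \<bar>snd (hs l z0 1 0) z - snd (hs m z0 1 0) z\<bar> \<le> C1 * \<bar>l - m\<bar>"
    using lip_lam[OF L0, of z0 1 0] by blast
  obtain C2 where C2: "C2 \<ge> 0" "\<forall>l\<in>{0..Lb}. \<forall>m\<in>{0..Lb}. \<forall>z. \<bar>z - z0\<bar> \<le> T \<longrightarrow>
     \<bar>fst (hs l z0 0 1) z - fst (hs m z0 0 1) z\<bar> \<le> C2 * \<bar>l - m\<bar> \<and>
     \<bar>snd (hs l z0 0 1) z - snd (hs m z0 0 1) z\<bar> \<le> C2 * \<bar>l - m\<bar>"
    using lip_lam[OF L0, of z0 0 1] by blast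
  have zT: "\<bar>z0 + T - z0\<bar> \<le> T" using T by simp
  have c1: "continuous_on {0..Lb} (\<lambda>l. u l (z0+T))"
    by (rule lip_cont[OF C1(1)]) (use C1(2) zT in \<open>auto simp: u_def\<close>)
  have c2: "continuous_on {0..Lb} (\<lambda>l. v' l (z0+T))"
    by (rule lip_cont[OF C2(1)]) (use C2(2) zT in \<open>auto simp: v'_def\<close>)
  show ?thesis unfolding Dl_def by (intro continuous_intros c1 c2)
qed

lemma Dl_lD: "\<exists>lD. 0 < lD \<and> lD \<le> Lb \<and> Dl lD < 0"
proof -
  obtain lD where lD: "0 < lD" "lD \<le> Lb" "v lD (z0+T) = 0" "v' lD (z0+T) < 0" using lamD by blast
  define p where "p = v' lD (z0+T)"
  define q where "q = u lD (z0+T)"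
  have qp: "q * p = 1" using wronsk[of lD "z0+T"] lD by (simp add: p_def q_def)
  have "(q + p + 2) * p = 1 + p^2 + 2*p" using qp by (simp add: algebra_simps power2_eq_square)
  also have "\<dots> = (p + 1)^2" by (simp add: power2_eq_square algebra_simps)
  finally have "(q + p + 2) * p \<ge> 0" by simp
  then have "q + p + 2 \<le> 0" using lD(4) by (simp add: p_def zero_le_mult_iff)
  moreover have "exp (c*\<gamma>*lD*T) + exp (-(c*\<gamma>*lD*T)) > 0" by (simp add: add_pos_pos)
  ultimately have "Dl lD < 0" by (simp add: Dl_def p_def q_def)
  then show ?thesis using lD by blast
qed

lemma vLb_ge1: "v' Lb (z0+T) \<ge> 1"
proof -
  have vnn: "v Lb r \<ge> 0" if r: "z0 \<le> r" "r \<le> z0+T" for r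
  proof -
    have "v Lb z0 \<le> v Lb r"
    proof (rule DERIV_nonneg_imp_increasing_open[OF r(1)])
      fix x assume "z0 < x" "x < r"
      then show "\<exists>y. (v Lb has_real_derivative y) (at x) \<and> 0 \<le> y"
        using dv(1) vLb_pos r by (intro exI[of _ "v' Lb x"]) (auto simp: less_imp_le)
    qed (rule deriv_cont[OF dv(1)])
    then show ?thesis using hv by simp
  qed
  have "v' Lb z0 \<le> v' Lb (z0+T)"
  proof (rule DERIV_nonneg_imp_increasing_open[of z0 "z0+T" "v' Lb"])
    show "z0 \<le> z0 + T" using T by simp
    fix x assume x: "z0 < x" "x < z0+T"
    have "Q Lb x * v Lb x \<ge> 0" using Q_Lb_pos[of x] vnn[of x] x by simp
    then show "\<exists>y. (v' Lb has_real_derivative y) (at x) \<and> 0 \<le> y"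
      using dv(2) by blast
  qed (rule deriv_cont[OF dv(2)])
  then show ?thesis using hv by simp
qed

lemma Q_ge: "Q l z \<ge> \<gamma>^2 * l^2 + \<gamma>"
proof -
  have "(-\<gamma>)*(-1) \<le> (-\<gamma>)*cos (f z)" using gam_neg cos_ge_minus_one[of "f z"] by (intro mult_left_mono) auto
  then show ?thesis by (simp add: Q_def)
qed

lemma u_compare:
  assumes k: "k \<ge> 0" "k^2 \<le> \<gamma>^2 * Lb^2 + \<gamma>"
  shows "u Lb (z0+T) \<ge> (exp (k*T) + exp (-(k*T))) / 2"
proof -
  define \<phi> where "\<phi> z = (exp (k*(z-z0)) + exp (-(k*(z-z0)))) / 2" for z
  define \<psi> where "\<psi> z = k * (exp (k*(z-z0)) - exp (-(k*(z-z0)))) / 2" for z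
  have d\<phi>: "(\<phi> has_real_derivative \<psi> z) (at z)" for z
    unfolding \<phi>_def \<psi>_def by (auto intro!: derivative_eq_intros simp: field_simps)
  have d\<psi>: "(\<psi> has_real_derivative k^2 * \<phi> z) (at z)" for z
    unfolding \<phi>_def \<psi>_def by (auto intro!: derivative_eq_intros simp: field_simps power2_eq_square)
  have \<phi>pos: "\<phi> z > 0" for z by (simp add: \<phi>_def add_pos_pos)
  have Qk: "Q Lb z - k^2 \<ge> 0" for z using Q_ge[of Lb z] k by simp
  define h where "h z = u' Lb z * \<phi> z - u Lb z * \<psi> z" for z
  have dh: "(h has_real_derivative (Q Lb z - k^2) * u Lb z * \<phi> z) (at z)" for z
  proof -
    have "(h has_real_derivative (Q Lb z * u Lb z * \<phi> z + u' Lb z * \<psi> z - (u' Lb z * \<psi> z + u Lb z * (k^2 * \<phi> z)))) (at z)"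
      unfolding h_def using du[of Lb z] d\<phi>[of z] d\<psi>[of z] by (auto intro!: derivative_eq_intros)
    then show ?thesis by (simp add: algebra_simps)
  qed
  have h0: "h z0 = 0" using hu by (simp add: h_def \<psi>_def)
  have claim: "u Lb t \<ge> \<phi> t" if t: "z0 \<le> t" and pos: "\<And>r. z0 \<le> r \<Longrightarrow> r < t \<Longrightarrow> u Lb r > 0" for t
  proof -
    have hnn: "h r \<ge> 0" if r: "z0 \<le> r" "r \<le> t" for r
    proof -
      have "h z0 \<le> h r"
      proof (rule DERIV_nonneg_imp_increasing_open[OF r(1)])
        fix x assume x: "z0 < x" "x < r"
        have "(Q Lb x - k^2) * u Lb x * \<phi> x \<ge> 0"
          using Qk[of x] pos[of x] \<phi>pos[of x] x r by simp
        then show "\<exists>y. (h has_real_derivative y) (at x) \<and> 0 \<le> y" using dh by blast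
      qed (rule deriv_cont[OF dh])
      then show ?thesis using h0 by simp
    qed
    have dq: "((\<lambda>z. u Lb z / \<phi> z) has_real_derivative h z / (\<phi> z)^2) (at z)" for z
    proof -
      have "((\<lambda>z. u Lb z / \<phi> z) has_real_derivative (u' Lb z * \<phi> z - u Lb z * \<psi> z) / (\<phi> z * \<phi> z)) (at z)"
        using DERIV_divide[OF du(1)[of Lb z] d\<phi>[of z]] \<phi>pos[of z] by simp
      then show ?thesis by (simp add: h_def power2_eq_square)
    qed
    have "u Lb z0 / \<phi> z0 \<le> u Lb t / \<phi> t"
    proof (rule DERIV_nonneg_imp_increasing_open[OF t])
      fix x assume x: "z0 < x" "x < t"
      show "\<exists>y. ((\<lambda>z. u Lb z / \<phi> z) has_real_derivative y) (at x) \<and> 0 \<le> y"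
        using dq[of x] hnn[of x] x by (intro exI[of _ "h x / (\<phi> x)^2"]) auto
    qed (rule deriv_cont[OF dq])
    moreover have "u Lb z0 / \<phi> z0 = 1" using hu by (simp add: \<phi>_def)
    ultimately show ?thesis using \<phi>pos[of t] by (simp add: le_divide_eq)
  qed
  have "\<forall>t\<in>{z0..z0+T}. u Lb t > 0"
  proof (rule first_fail)
    show "z0 \<le> z0 + T" using T by simp
    show "continuous_on {z0..z0+T} (u Lb)" by (rule deriv_cont[OF du(1)])
    show "u Lb z0 > 0" using hu by simp
    fix t assume "z0 \<le> t" "t \<le> z0 + T" "\<And>r. z0 \<le> r \<Longrightarrow> r < t \<Longrightarrow> u Lb r > 0"
    then show "u Lb t > 0" using claim[of t] \<phi>pos[of t] by fastforce
  qed
  then have "u Lb (z0+T) \<ge> \<phi> (z0+T)" using T by (intro claim) auto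
  then show ?thesis by (simp add: \<phi>_def)
qed

lemma Dl_Lb: "Dl Lb > 0"
proof -
  define g where "g = - \<gamma>"
  have g1: "g \<ge> 1" using gam_ge1 by (simp add: g_def)
  define k where "k = sqrt (g^2 * Lb^2 - g)"
  have gL: "g * Lb \<ge> 1" using g1 Lb_gt1 by (smt (verit) mult_le_cancel_left1 mult_mono)
  have kk: "(g * Lb - 1)^2 \<le> g^2 * Lb^2 - g"
  proof -
    have "g + 1 \<le> 2 * g * Lb" using g1 Lb_gt1 by (smt (verit) mult_le_cancel_left1 mult_mono)
    then show ?thesis by (simp add: power2_eq_square algebra_simps)
  qed
  have k1: "k \<ge> g * Lb - 1" unfolding k_def by (rule real_le_rsqrt[OF kk])
  have kpos: "k \<ge> 0" using k1 gL by simp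
  have ksq: "k^2 \<le> \<gamma>^2 * Lb^2 + \<gamma>"
  proof -
    have "g^2 * Lb^2 - g \<ge> 0" using kk by (smt (verit) zero_le_power2)
    then show ?thesis by (simp add: k_def g_def)
  qed
  have u: "u Lb (z0+T) \<ge> (exp (k*T) + exp (-(k*T))) / 2" by (rule u_compare[OF kpos ksq])
  have v: "v' Lb (z0+T) \<ge> 1" by (rule vLb_ge1)
  define a where "a = c*\<gamma>*Lb*T"
  have absa: "\<bar>a\<bar> = \<bar>c\<bar> * g * Lb * T" using T Lb_gt1 gam_neg by (simp add: a_def g_def abs_mult)
  have "g * Lb * (1 - \<bar>c\<bar>) = g * (1 - \<bar>c\<bar>) + (1 + 2/T)"
  proof -
    have ne: "g * (1 - \<bar>c\<bar>) \<noteq> 0" using g1 cabs by simp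
    show ?thesis unfolding Lb_def g_def[symmetric] using ne by (simp add: field_simps)
  qed
  moreover have "g * (1 - \<bar>c\<bar>) > 0" using g1 cabs by simp
  ultimately have "g * Lb * (1 - \<bar>c\<bar>) - 1 \<ge> 2/T" by simp
  then have "(k - \<bar>c\<bar> * g * Lb) * T \<ge> 2/T * T" using k1 T
    by (intro mult_right_mono) (auto simp: algebra_simps)
  then have kT: "k * T \<ge> \<bar>a\<bar> + 2" using T by (simp add: absa algebra_simps)
  have e2: "exp (2::real) \<ge> 4"
  proof -
    have "exp (1::real) \<ge> 2" using exp_ge_add_one_self[of 1] by simp
    then have "exp 1 * exp 1 \<ge> 2 * (2::real)" by (intro mult_mono) auto
    then show ?thesis by (simp flip: exp_add)
  qed
  have "exp (\<bar>a\<bar> + 2) \<le> exp (k*T)" using kT by simp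
  then have ek: "exp \<bar>a\<bar> * exp 2 \<le> exp (k*T)" by (simp add: exp_add)
  have "exp \<bar>a\<bar> * 4 \<le> exp \<bar>a\<bar> * exp 2" using e2 by (intro mult_left_mono) auto
  then have "exp (k*T) \<ge> 4 * exp \<bar>a\<bar>" using ek by linarith
  moreover have "exp a + exp (-a) \<le> 2 * exp \<bar>a\<bar>" by (cases "a \<ge> 0") auto
  moreover have "exp (-(k*T)) > 0" by simp
  ultimately have A: "exp (k*T) / 2 \<ge> exp a + exp (-a)" "exp (-(k*T)) > 0" by simp_all
  have B: "exp (k*T) / 2 + exp (-(k*T)) / 2 \<le> u Lb (z0+T)" using u by (simp add: add_divide_distrib)
  have "u Lb (z0+T) + v' Lb (z0+T) > exp a + exp (-a)" using A B v by linarith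
  then show ?thesis by (simp add: Dl_def a_def)
qed

lemma lam_star: "\<exists>ls. 0 < ls \<and> ls \<le> Lb \<and> Dl ls = 0"
proof -
  obtain lD where lD: "0 < lD" "lD \<le> Lb" "Dl lD < 0" using Dl_lD by blast
  have c: "continuous_on {lD..Lb} Dl" by (rule continuous_on_subset[OF Dl_cont]) (use lD in auto)
  obtain ls where ls: "lD \<le> ls" "ls \<le> Lb" "Dl ls = 0"
    using IVT'[of Dl lD 0 Lb] c lD Dl_Lb by auto
  show ?thesis using ls lD by (intro exI[of _ ls]) auto
qed

end


lemma hill_lin:
  assumes "hill Q x1 y1" "hill Q x2 y2"
  shows "hill Q (\<lambda>z. A * x1 z + B * x2 z) (\<lambda>z. A * y1 z + B * y2 z)"
  using assms unfolding hill_def by (auto intro!: derivative_eq_intros simp: algebra_simps)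

lemma hill_shift:
  assumes "\<And>z. Q (z + T) = Q z" "hill Q x y"
  shows "hill Q (\<lambda>z. x (z + T)) (\<lambda>z. y (z + T))"
  unfolding hill_def
proof
  fix z
  have "(x has_real_derivative y (z+T)) (at (z+T))" "(y has_real_derivative Q (z+T) * x (z+T)) (at (z+T))"
    using assms(2) unfolding hill_def by auto
  then show "((\<lambda>z. x (z + T)) has_real_derivative y (z + T)) (at z) \<and>
        ((\<lambda>z. y (z + T)) has_real_derivative Q z * x (z + T)) (at z)"
    using assms(1)[of z] by (simp add: DERIV_shift)
qed

context wave begin

lemma gam_id: "\<gamma>^2 = c^2 * \<gamma>^2 - \<gamma>"
proof -
  have "\<gamma> = \<gamma> * (\<gamma> * (c^2 - 1))" using gam_mul by simp
  then show ?thesis by (simp add: power2_eq_square algebra_simps)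
qed

lemma psol:
  assumes h: "hill (Q l) w w'"
  defines "a \<equiv> c * \<gamma> * l"
  shows "((\<lambda>z. exp (a*z) * w z) has_real_derivative exp (a*z) * (w' z + a * w z)) (at z)"
    and "((\<lambda>z. exp (a*z) * (w' z + a * w z)) has_real_derivative
           2 * c * \<gamma> * l * (exp (a*z) * (w' z + a * w z)) - \<gamma> * (l^2 + cos (f z)) * (exp (a*z) * w z)) (at z)"
proof -
  have dw: "(w has_real_derivative w' z) (at z)" "(w' has_real_derivative Q l z * w z) (at z)"
    using h unfolding hill_def by auto
  show "((\<lambda>z. exp (a*z) * w z) has_real_derivative exp (a*z) * (w' z + a * w z)) (at z)"
    using dw by (auto intro!: derivative_eq_intros simp: algebra_simps)
  have "((\<lambda>z. exp (a*z) * (w' z + a * w z)) has_real_derivative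
          a * exp (a*z) * (w' z + a * w z) + exp (a*z) * (Q l z * w z + a * w' z)) (at z)"
    using dw by (auto intro!: derivative_eq_intros simp: algebra_simps)
  moreover have "a * exp (a*z) * (w' z + a * w z) + exp (a*z) * (Q l z * w z + a * w' z)
     = 2 * c * \<gamma> * l * (exp (a*z) * (w' z + a * w z)) - \<gamma> * (l^2 + cos (f z)) * (exp (a*z) * w z)"
  proof -
    have "\<gamma>^2 * l^2 = (c^2 * \<gamma>^2 - \<gamma>) * l^2" using gam_id by simp
    also have "\<dots> = c^2 * \<gamma>^2 * l^2 - \<gamma> * l^2" by (simp add: algebra_simps)
    finally have e: "\<gamma>^2 * l^2 = c^2 * \<gamma>^2 * l^2 - \<gamma> * l^2" .
    have Qe: "Q l z = a^2 - \<gamma> * l^2 - \<gamma> * cos (f z)"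
      unfolding Q_def a_def power_mult_distrib using e by simp
    show ?thesis unfolding Qe unfolding a_def by (simp add: algebra_simps power2_eq_square)
  qed
  ultimately show "((\<lambda>z. exp (a*z) * (w' z + a * w z)) has_real_derivative
           2 * c * \<gamma> * l * (exp (a*z) * (w' z + a * w z)) - \<gamma> * (l^2 + cos (f z)) * (exp (a*z) * w z)) (at z)"
    by simp
qed

end

context wave2 begin

lemma eig:
  fixes U V U' V' \<kappa> :: real
  assumes W: "U * V' - U' * V = 1" and ch: "\<kappa> * \<kappa> - (U + V') * \<kappa> + 1 = 0"
  shows "\<exists>A B. (A \<noteq> 0 \<or> B \<noteq> 0) \<and> U * A + V * B = \<kappa> * A \<and> U' * A + V' * B = \<kappa> * B"
proof (cases "V \<noteq> 0 \<or> \<kappa> \<noteq> U")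
  case True
  show ?thesis
  proof (intro exI conjI)
    show "V \<noteq> 0 \<or> \<kappa> - U \<noteq> 0" using True by auto
    show "U * V + V * (\<kappa> - U) = \<kappa> * V" by (simp add: algebra_simps)
    show "U' * V + V' * (\<kappa> - U) = \<kappa> * (\<kappa> - U)" using W ch by (simp add: algebra_simps)
  qed
next
  case False
  then have V0: "V = 0" and kU: "\<kappa> = U" by auto
  show ?thesis
  proof (cases "\<kappa> - V' \<noteq> 0 \<or> U' \<noteq> 0")
    case True
    show ?thesis
    proof (intro exI conjI)
      show "\<kappa> - V' \<noteq> 0 \<or> U' \<noteq> 0" by (rule True)
      show "U * (\<kappa> - V') + V * U' = \<kappa> * (\<kappa> - V')" using W ch V0 kU by (simp add: algebra_simps)
      show "U' * (\<kappa> - V') + V' * U' = \<kappa> * U'" by (simp add: algebra_simps)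
    qed
  next
    case False
    then show ?thesis using V0 kU by (intro exI[of _ 1] exI[of _ 0]) simp
  qed
qed

lemma main_sol:
  "\<exists>ls p q. 0 < ls \<and> (\<forall>z. (p has_real_derivative q z) (at z) \<and>
      (q has_real_derivative 2 * c * \<gamma> * ls * q z - \<gamma> * (ls^2 + cos (f z)) * p z) (at z)) \<and>
      (\<forall>z. p (z + T) = p z \<and> q (z + T) = q z) \<and> (p 0 \<noteq> 0 \<or> q 0 \<noteq> 0) \<and>
      (\<exists>w w'. hill (Q ls) w w' \<and> (\<forall>z. p z = exp (c*\<gamma>*ls*z) * w z \<and> q z = exp (c*\<gamma>*ls*z) * (w' z + c*\<gamma>*ls * w z)))"
proof -
  obtain ls where ls: "0 < ls" "ls \<le> Lb" "Dl ls = 0" using lam_star by blast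
  define a where "a = c * \<gamma> * ls"
  define \<kappa> where "\<kappa> = exp (-(a*T))"
  define U where "U = u ls (z0+T)"
  define V where "V = v ls (z0+T)"
  define U' where "U' = u' ls (z0+T)"
  define V' where "V' = v' ls (z0+T)"
  have W: "U * V' - U' * V = 1" using wronsk by (simp add: U_def V_def U'_def V'_def)
  have D: "U + V' = exp (a*T) + \<kappa>" using ls(3) by (simp add: Dl_def U_def V'_def \<kappa>_def a_def)
  have kinv: "\<kappa> * exp (a*T) = 1" by (simp add: \<kappa>_def flip: exp_add)
  have ch: "\<kappa> * \<kappa> - (U + V') * \<kappa> + 1 = 0" using D kinv by (simp add: algebra_simps)
  obtain A B where AB: "A \<noteq> 0 \<or> B \<noteq> 0" "U * A + V * B = \<kappa> * A" "U' * A + V' * B = \<kappa> * B"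
    using eig[OF W ch] by blast
  define w where "w z = A * u ls z + B * v ls z" for z
  define w' where "w' z = A * u' ls z + B * v' ls z" for z
  have hw: "hill (Q ls) w w'" unfolding w_def w'_def by (rule hill_lin[OF hu(1) hv(1)])
  have w0: "w z0 = A" "w' z0 = B" using hu hv by (simp_all add: w_def w'_def)
  have wT: "w (z0+T) = \<kappa> * w z0" "w' (z0+T) = \<kappa> * w' z0"
    using AB w0 by (simp_all add: w_def w'_def U_def V_def U'_def V'_def algebra_simps)
  have hW: "hill (Q ls) (\<lambda>z. 1 * w (z + T) + (-\<kappa>) * w z) (\<lambda>z. 1 * w' (z + T) + (-\<kappa>) * w' z)"
    by (rule hill_lin[OF hill_shift[OF Q_periodic hw] hw])
  have wper: "w (z + T) = \<kappa> * w z \<and> w' (z + T) = \<kappa> * w' z" for z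
    using hill_unique[OF hW hill_zero Q_bound, of z0 z] wT by simp
  define p where "p z = exp (a*z) * w z" for z
  define q where "q z = exp (a*z) * (w' z + a * w z)" for z
  have ds: "(p has_real_derivative q z) (at z) \<and>
      (q has_real_derivative 2 * c * \<gamma> * ls * q z - \<gamma> * (ls^2 + cos (f z)) * p z) (at z)" for z
    using psol[OF hw, of z] unfolding p_def q_def a_def by auto
  have ea: "exp (a * (z + T)) * \<kappa> = exp (a * z)" for z
    by (simp add: \<kappa>_def algebra_simps flip: exp_add)
  have per: "p (z + T) = p z \<and> q (z + T) = q z" for z
  proof -
    have "p (z + T) = exp (a * (z+T)) * \<kappa> * w z" using wper[of z] by (simp add: p_def)
    moreover have "q (z + T) = exp (a * (z+T)) * \<kappa> * (w' z + a * w z)" using wper[of z]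
      by (simp add: q_def algebra_simps)
    ultimately show ?thesis using ea[of z] by (simp add: p_def q_def)
  qed
  have nz: "p 0 \<noteq> 0 \<or> q 0 \<noteq> 0"
  proof (rule ccontr)
    assume "\<not> ?thesis"
    then have "w 0 = 0" "w' 0 = 0" by (auto simp: p_def q_def)
    then have "w z0 = 0 \<and> w' z0 = 0" using hill_unique[OF hw hill_zero Q_bound, of 0 z0] by simp
    then show False using AB w0 by simp
  qed
  show ?thesis
    by (rule exI[of _ ls], rule exI[of _ p], rule exI[of _ q])
       (use ls ds per nz hw in \<open>auto simp: p_def q_def a_def\<close>)
qed

end


definition Emat :: "2 \<Rightarrow> 2 \<Rightarrow> complex^2^2" where
  "Emat i j = (\<chi> r s. if r = i \<and> s = j then 1 else 0)"

lemma sc_deriv: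
  assumes "(g has_real_derivative g') (at z)"
  shows "((\<lambda>z. g z *\<^sub>R (M::complex^2^2)) has_vector_derivative g' *\<^sub>R M) (at z)"
  using has_vector_derivative_scaleR[OF assms has_vector_derivative_const[of M]] by simp

lemma det2_zero:
  fixes m11 m12 m21 m22 x1 x2 :: real
  assumes "m11 * x1 + m12 * x2 = 0" "m21 * x1 + m22 * x2 = 0" "x1 \<noteq> 0 \<or> x2 \<noteq> 0"
  shows "m11 * m22 - m12 * m21 = 0"
proof -
  have a1: "m11 * x1 = - (m12 * x2)" "m21 * x1 = - (m22 * x2)" using assms(1,2) by linarith+
  have a2: "m22 * x2 = - (m21 * x1)" "m12 * x2 = - (m11 * x1)" using assms(1,2) by linarith+
  have "(m11 * m22 - m12 * m21) * x1 = 0"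
  proof -
    have "(m11 * m22 - m12 * m21) * x1 = m22 * (m11 * x1) - m12 * (m21 * x1)" by (simp add: algebra_simps)
    also have "\<dots> = m22 * (- (m12 * x2)) - m12 * (- (m22 * x2))" by (simp only: a1)
    finally show ?thesis by (simp add: algebra_simps)
  qed
  moreover have "(m11 * m22 - m12 * m21) * x2 = 0"
  proof -
    have "(m11 * m22 - m12 * m21) * x2 = m11 * (m22 * x2) - m21 * (m12 * x2)" by (simp add: algebra_simps)
    also have "\<dots> = m11 * (- (m21 * x1)) - m21 * (- (m11 * x1))" by (simp only: a2)
    finally show ?thesis by (simp add: algebra_simps)
  qed
  ultimately show ?thesis using assms(3) mult_eq_0_iff by metis
qed

context wave2 begin

lemma final: "\<exists>lam::real. lam > 0 \<and> complex_of_real lam \<in> specP c f \<and>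
           floquet_multiplier c f T (complex_of_real lam) 1"
proof -
  obtain ls p q w w' where ls: "0 < ls"
    and dpq: "\<And>z. (p has_real_derivative q z) (at z) \<and>
      (q has_real_derivative 2 * c * \<gamma> * ls * q z - \<gamma> * (ls^2 + cos (f z)) * p z) (at z)"
    and per: "\<And>z. p (z + T) = p z \<and> q (z + T) = q z"
    and nz: "p 0 \<noteq> 0 \<or> q 0 \<noteq> 0"
    and hw: "hill (Q ls) w w'"
    and pw: "\<And>z. p z = exp (c*\<gamma>*ls*z) * w z \<and> q z = exp (c*\<gamma>*ls*z) * (w' z + c*\<gamma>*ls * w z)"
    using main_sol by blast
  define a where "a = c * \<gamma> * ls"
  define lam where "lam = complex_of_real ls"
  define pC where "pC z = complex_of_real (p z)" for z
  define qC where "qC z = complex_of_real (q z)" for z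
  have sol: "solP c f lam pC"
    unfolding solP_def
  proof (intro exI[of _ qC] allI conjI)
    fix z
    show "(pC has_vector_derivative qC z) (at z)"
      unfolding pC_def qC_def by (rule has_vector_derivative_of_real) (use dpq in blast)
    have "(qC has_vector_derivative complex_of_real (2 * c * \<gamma> * ls * q z - \<gamma> * (ls^2 + cos (f z)) * p z)) (at z)"
      unfolding qC_def by (rule has_vector_derivative_of_real) (use dpq in blast)
    moreover have "complex_of_real (2 * c * \<gamma> * ls * q z - \<gamma> * (ls^2 + cos (f z)) * p z)
      = 2 * of_real c * of_real (gam c) * lam * qC z - of_real (gam c) * (lam^2 + of_real (cos (f z))) * pC z"
      by (simp add: lam_def pC_def qC_def \<gamma>_def)
    ultimately show "(qC has_vector_derivative
         2 * of_real c * of_real (gam c) * lam * qC z - of_real (gam c) * (lam^2 + of_real (cos (f z))) * pC z) (at z)"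
      by simp
  qed
  have cp: "continuous_on S p" for S using dpq by (intro deriv_cont) blast
  have bnd: "bounded (range pC)"
  proof -
    have "range pC \<subseteq> pC ` {0..T}"
    proof
      fix y assume "y \<in> range pC"
      then obtain z where z: "y = pC z" by blast
      obtain r where "0 \<le> r" "r \<le> T" "p z = p r" using periodic_reduce[of p T z] per T by blast
      then show "y \<in> pC ` {0..T}" using z by (auto simp: pC_def)
    qed
    moreover have "compact (pC ` {0..T})"
      unfolding pC_def by (intro compact_continuous_image continuous_on_of_real cp compact_Icc)
    ultimately show ?thesis using compact_imp_bounded bounded_subset by blast
  qed
  have ntriv: "\<exists>z. pC z \<noteq> 0"
  proof (rule ccontr)
    assume "\<not> ?thesis"
    then have p0: "p = (\<lambda>_. 0)" by (auto simp: pC_def fun_eq_iff)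
    then have "q 0 = 0" using dpq[of 0] DERIV_const[of 0 "at 0"] DERIV_unique by metis
    then show False using nz p0 by simp
  qed
  have spec: "lam \<in> specP c f" unfolding specP_def using sol bnd ntriv by blast
  define w1 where "w1 = fst (hs ls 0 1 (-a))"
  define w1' where "w1' = snd (hs ls 0 1 (-a))"
  define w2 where "w2 = fst (hs ls 0 0 1)"
  define w2' where "w2' = snd (hs ls 0 0 1)"
  have h1: "hill (Q ls) w1 w1'" "w1 0 = 1" "w1' 0 = -a" using hs[of ls 0 1 "-a"] by (auto simp: w1_def w1'_def)
  have h2: "hill (Q ls) w2 w2'" "w2 0 = 0" "w2' 0 = 1" using hs[of ls 0 0 1] by (auto simp: w2_def w2'_def)
  define P1 where "P1 z = exp (a*z) * w1 z" for z
  define Q1 where "Q1 z = exp (a*z) * (w1' z + a * w1 z)" for z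
  define P2 where "P2 z = exp (a*z) * w2 z" for z
  define Q2 where "Q2 z = exp (a*z) * (w2' z + a * w2 z)" for z
  define R where "R z = 2 * c * \<gamma> * ls" for z :: real
  define S where "S z = - \<gamma> * (ls^2 + cos (f z))" for z
  have dP1: "(P1 has_real_derivative Q1 z) (at z)" and dQ1: "(Q1 has_real_derivative R z * Q1 z + S z * P1 z) (at z)"
   and dP2: "(P2 has_real_derivative Q2 z) (at z)" and dQ2: "(Q2 has_real_derivative R z * Q2 z + S z * P2 z) (at z)" for z
    using psol[OF h1(1), of z] psol[OF h2(1), of z]
    unfolding P1_def Q1_def P2_def Q2_def R_def S_def a_def by (auto simp: algebra_simps)
  define F where "F z = P1 z *\<^sub>R Emat 1 1 + P2 z *\<^sub>R Emat 1 2 + Q1 z *\<^sub>R Emat 2 1 + Q2 z *\<^sub>R Emat 2 2" for z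
  have two: "(2::2) \<noteq> 1" by simp
  have Fe: "F z $ 1 $ 1 = of_real (P1 z)" "F z $ 1 $ 2 = of_real (P2 z)"
    "F z $ 2 $ 1 = of_real (Q1 z)" "F z $ 2 $ 2 = of_real (Q2 z)" for z
    using two by (simp_all add: F_def Emat_def vector_scaleR_component complex_eq_iff)
  have F0: "F 0 = mat 1"
    using h1 h2 by (simp add: vec_eq_iff forall_2 Fe mat_def P1_def P2_def Q1_def Q2_def)
  have dF: "(F has_vector_derivative (coefP c f lam z ** F z)) (at z)" for z
  proof -
    have "(F has_vector_derivative (Q1 z *\<^sub>R Emat 1 1 + Q2 z *\<^sub>R Emat 1 2 + (R z * Q1 z + S z * P1 z) *\<^sub>R Emat 2 1
             + (R z * Q2 z + S z * P2 z) *\<^sub>R Emat 2 2)) (at z)"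
      unfolding F_def[abs_def] by (intro has_vector_derivative_add sc_deriv dP1 dQ1 dP2 dQ2)
    moreover have "Q1 z *\<^sub>R Emat 1 1 + Q2 z *\<^sub>R Emat 1 2 + (R z * Q1 z + S z * P1 z) *\<^sub>R Emat 2 1
             + (R z * Q2 z + S z * P2 z) *\<^sub>R Emat 2 2 = coefP c f lam z ** F z"
      using two by (simp add: vec_eq_iff forall_2 Emat_def vector_scaleR_component matrix_matrix_mult_def sum_2
          coefP_def Fe R_def S_def lam_def \<gamma>_def complex_eq_iff algebra_simps)
    ultimately show ?thesis by simp
  qed
  have fm: "fund_matrix c f lam F" unfolding fund_matrix_def using F0 dF by blast
  define x1 where "x1 = p 0"
  define x2 where "x2 = q 0"
  have wd: "w 0 = x1" "w' 0 = x2 - a * x1" using pw[of 0] by (simp_all add: x1_def x2_def a_def)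
  have hc: "hill (Q ls) (\<lambda>z. x1 * w1 z + x2 * w2 z) (\<lambda>z. x1 * w1' z + x2 * w2' z)"
    by (rule hill_lin[OF h1(1) h2(1)])
  have eqT: "x1 * w1 T + x2 * w2 T = w T \<and> x1 * w1' T + x2 * w2' T = w' T"
    using hill_unique[OF hc hw Q_bound, of 0 T] h1 h2 wd by (simp add: algebra_simps)
  have pT: "p T = x1" "q T = x2" using per[of 0] by (simp_all add: x1_def x2_def)
  have r1: "(P1 T - 1) * x1 + P2 T * x2 = 0"
  proof -
    have "P1 T * x1 + P2 T * x2 = exp (a*T) * (x1 * w1 T + x2 * w2 T)" by (simp add: P1_def P2_def algebra_simps)
    also have "\<dots> = p T" using eqT pw[of T] by (simp add: a_def)
    finally show ?thesis using pT by (simp add: algebra_simps)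
  qed
  have r2: "Q1 T * x1 + (Q2 T - 1) * x2 = 0"
  proof -
    have "Q1 T * x1 + Q2 T * x2 = exp (a*T) * ((x1 * w1' T + x2 * w2' T) + a * (x1 * w1 T + x2 * w2 T))"
      by (simp add: Q1_def Q2_def algebra_simps)
    also have "\<dots> = q T" using eqT pw[of T] by (simp add: a_def)
    finally show ?thesis using pT by (simp add: algebra_simps)
  qed
  have xnz: "x1 \<noteq> 0 \<or> x2 \<noteq> 0" using nz by (simp add: x1_def x2_def)
  have d0: "(P1 T - 1) * (Q2 T - 1) - P2 T * Q1 T = 0" by (rule det2_zero[OF r1 r2 xnz])
  have "det (F T - mat 1) = complex_of_real ((P1 T - 1) * (Q2 T - 1) - P2 T * Q1 T)"
    using two by (simp add: det_2 Fe mat_def)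
  then have "det (F T - mat 1) = 0" using d0 by simp
  then have fl: "floquet_multiplier c f T lam 1" unfolding floquet_multiplier_def using fm by blast
  show ?thesis using ls spec fl unfolding lam_def by blast
qed

end

theorem proposition5p1:
  fixes c E T :: real and f :: "real \<Rightarrow> real"
  assumes "subluminal_librational c f E"
    and "fundamental_period f T"
  shows "\<exists>lam::real. lam > 0 \<and> complex_of_real lam \<in> specP c f \<and>
           floquet_multiplier c f T (complex_of_real lam) 1"
proof -
  interpret wave c E T f using assms by unfold_locales
  obtain z0 z1 where zz: "f1 z0 = 0" "z0 < z1" "z1 < z0 + T" "f1 z1 = 0" "f1 (z0 + T) = 0" "f2 z0 \<noteq> 0"
    using zeros by blast
  interpret wave2 c E T f z0 z1 by unfold_locales (use zz in auto)
  show ?thesis by (rule final)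
qed


end
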